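(* Let $n\ge2$ and $\beta\in(0,\infty)^3$ with $\beta_0\le\beta_1\le\beta_2$. Then for any $x,y\in\mathbb{N}^n$ with $x\le y$ (coordinatewise) there exists a coupling of two processes $(X^n_t)_{t\ge0}$ and $(Y^n_t)_{t\ge0}$ with laws $\mathbb{P}_x$ and $\mathbb{P}_y$ respectively such that almost surely $X^n_t\le Y^n_t$ coordinatewise for all $t\ge0$.
   Context: Fix $n\ge2$ and $\beta=(\beta_0,\beta_1,\beta_2)\in(0,\infty)^3$. For $x\in\mathbb{N}^n$, with the zero boundary convention $x(0)=x(n+1)=0$, let $V_j(x)=\mathbf 1_{\{x(j-1)>x(j)\}}+\mathbf 1_{\{x(j+1)>x(j)\}}\in\{0,1,2\}$. The crystal process $X^n$ with $n$ sites and parameter $\beta$ is the continuous-time Markov chain on $\mathbb{N}^n$ jumping from $x$ to $x+e_j$ at rate $\beta_{V_j(x)}$ ($j=1,\dots,n$) with no other transitions; $\mathbb{P}_x$ is its law started at $x$. *)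

theory Defs
  imports "HOL-Probability.Probability"
begin

text \<open>States of the crystal process with n sites: functions nat => nat that vanish
outside the sites 1..n (so that x 0 = x (n+1) = 0, the zero boundary convention).\<close>

definition crystal_states :: "nat \<Rightarrow> (nat \<Rightarrow> nat) set" where
  "crystal_states n = {x. \<forall>j. (j = 0 \<or> n < j) \<longrightarrow> x j = 0}"

definition crystal_V :: "nat \<Rightarrow> (nat \<Rightarrow> nat) \<Rightarrow> nat" where
  "crystal_V j x = (if x (j - 1) > x j then 1 else 0) + (if x (j + 1) > x j then 1 else 0)"

text \<open>Matrix entries of the k-th power of the generator Q, where
Q(x, x + e_j) = beta(V_j x) for j in 1..n and Q(x,x) = - sum of these rates.\<close>

fun crystal_Qpow :: "nat \<Rightarrow> (nat \<Rightarrow> real) \<Rightarrow> nat \<Rightarrow> (nat \<Rightarrow> nat) \<Rightarrow> (nat \<Rightarrow> nat) \<Rightarrow> real" where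
  "crystal_Qpow n \<beta> 0 x y = (if x = y then 1 else 0)"
| "crystal_Qpow n \<beta> (Suc k) x y =
     (\<Sum>j\<in>{1..n}. \<beta> (crystal_V j x) *
        (crystal_Qpow n \<beta> k (x(j := x j + 1)) y - crystal_Qpow n \<beta> k x y))"

text \<open>Transition probabilities P_t(x,y) = exp(tQ)(x,y) (rates are bounded, so the chain
is non-explosive and its transition function is the exponential of the generator).\<close>

definition crystal_P :: "nat \<Rightarrow> (nat \<Rightarrow> real) \<Rightarrow> real \<Rightarrow> (nat \<Rightarrow> nat) \<Rightarrow> (nat \<Rightarrow> nat) \<Rightarrow> real" where
  "crystal_P n \<beta> t x y = (\<Sum>k. t ^ k / fact k * crystal_Qpow n \<beta> k x y)"

text \<open>X is (a version of) the crystal process with n sites and parameter beta, started at x,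
on the probability space M: each X t is a random variable, the finite-dimensional
distributions are those of the Markov chain with transition function crystal_P started at x,
and almost every path is cadlag (piecewise constant, right-continuous with left limits in the
discrete topology). This determines the law P_x on path space.\<close>

definition crystal_process ::
  "nat \<Rightarrow> (nat \<Rightarrow> real) \<Rightarrow> 'w measure \<Rightarrow> (real \<Rightarrow> 'w \<Rightarrow> (nat \<Rightarrow> nat)) \<Rightarrow> (nat \<Rightarrow> nat) \<Rightarrow> bool" where
  "crystal_process n \<beta> M X x \<longleftrightarrow>
     (\<forall>t\<ge>0. X t \<in> measurable M (count_space UNIV)) \<and>
     (\<forall>ts ys. sorted_wrt (<) ts \<longrightarrow> (\<forall>t\<in>set ts. 0 \<le> t) \<longrightarrow> length ys = length ts \<longrightarrow>
        measure M {\<omega> \<in> space M. \<forall>i<length ts. X (ts ! i) \<omega> = ys ! i} =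
        (\<Prod>i<length ts. crystal_P n \<beta>
             (ts ! i - (if i = 0 then 0 else ts ! (i - 1)))
             (if i = 0 then x else ys ! (i - 1)) (ys ! i))) \<and>
     (AE \<omega> in M.
        (\<forall>t\<ge>0. \<exists>\<epsilon>>0. \<forall>s. t \<le> s \<and> s < t + \<epsilon> \<longrightarrow> X s \<omega> = X t \<omega>) \<and>
        (\<forall>t>0. \<exists>\<epsilon>>0. \<forall>s r. t - \<epsilon> < s \<and> s < t \<and> t - \<epsilon> < r \<and> r < t \<longrightarrow> X s \<omega> = X r \<omega>))"

end

theory Submission
  imports Defs
begin


locale crys =
  fixes n :: nat and \<beta> :: "nat \<Rightarrow> real"
  assumes n1: "1 \<le> n" and b0: "0 < \<beta> 0" and b01: "\<beta> 0 \<le> \<beta> 1" and b12: "\<beta> 1 \<le> \<beta> 2"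
begin

definition lam :: real where "lam = real n * \<beta> 2"
definition Marks :: "(nat \<times> nat) set" where "Marks = {1..n} \<times> {0..2}"
definition w :: "nat \<times> nat \<Rightarrow> real" where
  "w m = (if m \<in> Marks then (\<beta> (snd m) - (if snd m = 0 then 0 else \<beta> (snd m - 1))) / lam else 0)"
definition upd :: "(nat \<Rightarrow> nat) \<Rightarrow> nat \<times> nat \<Rightarrow> (nat \<Rightarrow> nat)" where
  "upd a m = (if m \<in> Marks \<and> snd m \<le> crystal_V (fst m) a then a(fst m := a (fst m) + 1) else a)"
definition Aop :: "((nat \<Rightarrow> nat) \<Rightarrow> real) \<Rightarrow> (nat \<Rightarrow> nat) \<Rightarrow> real" where
  "Aop g a = (\<Sum>m\<in>Marks. w m * g (upd a m))"
definition Kp :: "nat \<Rightarrow> (nat \<Rightarrow> nat) \<Rightarrow> (nat \<Rightarrow> nat) \<Rightarrow> real" where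
  "Kp i a b = (Aop ^^ i) (\<lambda>c. if c = b then 1 else 0) a"
definition U :: "real \<Rightarrow> (nat \<Rightarrow> nat) \<Rightarrow> (nat \<Rightarrow> nat) \<Rightarrow> real" where
  "U d a b = exp (- lam * d) * (\<Sum>i. (lam * d) ^ i / fact i * Kp i a b)"

lemma b2: "0 < \<beta> 2" using b0 b01 b12 by linarith
lemma lam_pos: "0 < lam" unfolding lam_def using n1 b2 by simp
lemma finite_Marks[simp]: "finite Marks" by (simp add: Marks_def)

lemma w_nonneg: "0 \<le> w m"
  using lam_pos b0 b01 b12 unfolding w_def Marks_def
  by (auto simp: divide_simps le_Suc_eq numeral_2_eq_2)

lemma w_j0: "j \<in> {1..n} \<Longrightarrow> w (j,0) = \<beta> 0 / lam" by (simp add: w_def Marks_def)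
lemma w_j1: "j \<in> {1..n} \<Longrightarrow> w (j,Suc 0) = (\<beta> 1 - \<beta> 0) / lam" by (simp add: w_def Marks_def)
lemma w_j2: "j \<in> {1..n} \<Longrightarrow> w (j,2) = (\<beta> 2 - \<beta> 1) / lam" by (simp add: w_def Marks_def)
lemma sum012: "(\<Sum>v\<in>{0..2::nat}. f v) = f 0 + f 1 + (f 2 :: real)"
proof -
  have "{0..2::nat} = {0,1,2}" by auto
  then show ?thesis by simp
qed
lemma lamdiv: "lam * (p / lam * X) = p * X" using lam_pos by simp

lemma sum_w_j: assumes "j \<in> {1..n}" shows "(\<Sum>v\<in>{0..2}. w (j, v)) = \<beta> 2 / lam"
  using assms by (simp add: sum012 w_j0 w_j1 w_j2 diff_divide_distrib)

lemma sum_w: "(\<Sum>m\<in>Marks. w m) = 1"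
proof -
  have "(\<Sum>m\<in>Marks. w m) = (\<Sum>j\<in>{1..n}. \<Sum>v\<in>{0..2}. w (j, v))"
    unfolding Marks_def by (simp add: sum.cartesian_product)
  also have "\<dots> = (\<Sum>j\<in>{1..n}. \<beta> 2 / lam)" by (intro sum.cong) (auto simp: sum_w_j)
  also have "\<dots> = 1" using lam_pos n1 b2 by (simp add: lam_def)
  finally show ?thesis .
qed

lemma Kp_0: "Kp 0 a b = (if a = b then 1 else 0)" by (simp add: Kp_def)
lemma Kp_Suc: "Kp (Suc i) a b = (\<Sum>m\<in>Marks. w m * Kp i (upd a m) b)"
  by (simp add: Kp_def Aop_def)

lemma Kp_bounds: "0 \<le> Kp i a b \<and> Kp i a b \<le> 1"
proof (induction i arbitrary: a)
  case 0 then show ?case by (simp add: Kp_0)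
next
  case (Suc i)
  have "(\<Sum>m\<in>Marks. w m * Kp i (upd a m) b) \<le> (\<Sum>m\<in>Marks. w m)"
    by (intro sum_mono) (use Suc w_nonneg in \<open>auto intro: mult_left_le\<close>)
  moreover have "0 \<le> (\<Sum>m\<in>Marks. w m * Kp i (upd a m) b)"
    by (intro sum_nonneg) (use Suc w_nonneg in auto)
  ultimately show ?case by (simp add: Kp_Suc sum_w)
qed

lemma Aop_j: assumes j: "j \<in> {1..n}"
  shows "lam * (\<Sum>v\<in>{0..2}. w (j, v) * g (upd a (j, v)))
       = \<beta> (crystal_V j a) * g (a(j := a j + 1)) + (\<beta> 2 - \<beta> (crystal_V j a)) * g a"
proof -
  have V: "crystal_V j a = 0 \<or> crystal_V j a = 1 \<or> crystal_V j a = 2" unfolding crystal_V_def by auto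
  have u: "upd a (j, v) = (if v \<le> 2 \<and> v \<le> crystal_V j a then a(j := a j + 1) else a)" for v
    using j by (auto simp: upd_def Marks_def)
  have "lam * (\<Sum>v\<in>{0..2}. w (j, v) * g (upd a (j, v)))
     = \<beta> 0 * g (upd a (j,0)) + (\<beta> 1 - \<beta> 0) * g (upd a (j,1)) + (\<beta> 2 - \<beta> 1) * g (upd a (j,2))"
    using j lam_pos by (simp add: sum012 w_j0 w_j1 w_j2 distrib_left lamdiv)
  also have "\<dots> = \<beta> (crystal_V j a) * g (a(j := a j + 1)) + (\<beta> 2 - \<beta> (crystal_V j a)) * g a"
    using V by (elim disjE) (simp_all add: u algebra_simps)
  finally show ?thesis .
qed

lemma Bop_eq:
  "(\<Sum>j\<in>{1..n}. \<beta> (crystal_V j a) * (g (a(j := a j + 1)) - g a)) = lam * (Aop g a - g a)"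
proof -
  have "lam * Aop g a = (\<Sum>j\<in>{1..n}. lam * (\<Sum>v\<in>{0..2}. w (j, v) * g (upd a (j, v))))"
    unfolding Aop_def Marks_def by (simp add: sum.cartesian_product sum_distrib_left)
  also have "\<dots> = (\<Sum>j\<in>{1..n}. \<beta> (crystal_V j a) * g (a(j := a j + 1)) + (\<beta> 2 - \<beta> (crystal_V j a)) * g a)"
    by (intro sum.cong) (auto simp: Aop_j)
  finally have "lam * Aop g a = \<dots>" .
  moreover have "lam * g a = (\<Sum>j\<in>{1..n}. \<beta> 2 * g a)" by (simp add: lam_def)
  ultimately have "lam * (Aop g a - g a) = (\<Sum>j\<in>{1..n}. \<beta> (crystal_V j a) * g (a(j := a j + 1)) + (\<beta> 2 - \<beta> (crystal_V j a)) * g a) - (\<Sum>j\<in>{1..n}. \<beta> 2 * g a)"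
    by (simp add: right_diff_distrib)
  also have "\<dots> = (\<Sum>j\<in>{1..n}. \<beta> (crystal_V j a) * (g (a(j := a j + 1)) - g a))"
    unfolding sum_subtractf[symmetric] by (rule sum.cong) (simp_all add: algebra_simps)
  finally show ?thesis by simp
qed

end


context crys begin

definition Bop :: "((nat \<Rightarrow> nat) \<Rightarrow> real) \<Rightarrow> (nat \<Rightarrow> nat) \<Rightarrow> real" where
  "Bop g a = lam * (Aop g a - g a)"

lemma Qpow_Bop: "crystal_Qpow n \<beta> k a b = (Bop ^^ k) (\<lambda>c. if c = b then 1 else 0) a"
proof (induction k arbitrary: a)
  case 0 then show ?case by simp
next
  case (Suc k)
  let ?F = "(Bop ^^ k) (\<lambda>c. if c = b then 1 else 0)"
  have "crystal_Qpow n \<beta> (Suc k) a b = (\<Sum>j\<in>{1..n}. \<beta> (crystal_V j a) * (?F (a(j := a j + 1)) - ?F a))"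
    by (simp only: crystal_Qpow.simps Suc.IH)
  also have "\<dots> = lam * (Aop ?F a - ?F a)" by (rule Bop_eq)
  also have "\<dots> = (Bop ^^ Suc k) (\<lambda>c. if c = b then 1 else 0) a" by (simp add: Bop_def)
  finally show ?case .
qed

lemma Aop_sum: "Aop (\<lambda>c. \<Sum>i\<in>I. F i c) a = (\<Sum>i\<in>I. Aop (F i) a)"
  unfolding Aop_def by (simp add: sum_distrib_left sum.swap[of _ Marks])

lemma Aop_scale: "Aop (\<lambda>c. r * F c) a = r * Aop F a"
  unfolding Aop_def by (simp add: sum_distrib_left algebra_simps)

definition cc :: "nat \<Rightarrow> nat \<Rightarrow> real" where
  "cc k i = of_nat (k choose i) * (- lam) ^ (k - i) * lam ^ i"

lemma cc_Suc: "cc (Suc k) i = (if i = 0 then 0 else lam * cc k (i - 1)) + (- lam) * cc k i"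
proof (cases i)
  case 0 then show ?thesis by (simp add: cc_def)
next
  case (Suc j)
  show ?thesis
  proof (cases "j < k")
    case True
    then have "k - j = Suc (k - Suc j)" by simp
    then show ?thesis using Suc by (simp add: cc_def algebra_simps)
  next
    case False
    then have z: "k choose Suc j = 0" "k - j = 0" by simp_all
    have c1: "Suc k choose Suc j = k choose j" using z by simp
    have "cc (Suc k) (Suc j) = of_nat (k choose j) * lam ^ Suc j"
      unfolding cc_def c1 using z by simp
    also have "\<dots> = lam * cc k j + (- lam) * cc k (Suc j)"
      unfolding cc_def using z by simp
    finally show ?thesis using Suc by simp
  qed
qed

lemma cc_out: "k < i \<Longrightarrow> cc k i = 0" by (simp add: cc_def)

lemma Bop_binom: "(Bop ^^ k) g a = (\<Sum>i\<le>k. cc k i * (Aop ^^ i) g a)"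
proof (induction k arbitrary: a)
  case 0 then show ?case by (simp add: cc_def)
next
  case (Suc k)
  have IH: "(Bop ^^ k) g = (\<lambda>c. \<Sum>i\<le>k. cc k i * (Aop ^^ i) g c)" using Suc by auto
  have "(Bop ^^ Suc k) g a = lam * (Aop (\<lambda>c. \<Sum>i\<le>k. cc k i * (Aop ^^ i) g c) a - (\<Sum>i\<le>k. cc k i * (Aop ^^ i) g a))"
    by (simp add: Bop_def IH)
  also have "Aop (\<lambda>c. \<Sum>i\<le>k. cc k i * (Aop ^^ i) g c) a = (\<Sum>i\<le>k. cc k i * (Aop ^^ Suc i) g a)"
    by (simp add: Aop_sum Aop_scale)
  also have "lam * ((\<Sum>i\<le>k. cc k i * (Aop ^^ Suc i) g a) - (\<Sum>i\<le>k. cc k i * (Aop ^^ i) g a))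
      = (\<Sum>i\<le>k. lam * cc k i * (Aop ^^ Suc i) g a) + (\<Sum>i\<le>k. (- lam) * cc k i * (Aop ^^ i) g a)"
    by (simp add: right_diff_distrib sum_distrib_left mult.assoc sum_negf)
  also have "\<dots> = (\<Sum>i\<le>Suc k. cc (Suc k) i * (Aop ^^ i) g a)"
  proof -
    have "(\<Sum>i\<le>Suc k. cc (Suc k) i * (Aop ^^ i) g a)
       = (\<Sum>i\<le>Suc k. (if i = 0 then 0 else lam * cc k (i - 1)) * (Aop ^^ i) g a)
         + (\<Sum>i\<le>Suc k. (- lam) * cc k i * (Aop ^^ i) g a)"
      by (simp only: cc_Suc distrib_right sum.distrib)
    also have "(\<Sum>i\<le>Suc k. (if i = 0 then 0 else lam * cc k (i - 1)) * (Aop ^^ i) g a)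
        = (\<Sum>i\<le>k. lam * cc k i * (Aop ^^ Suc i) g a)"
      by (subst sum.atMost_Suc_shift) simp
    also have "(\<Sum>i\<le>Suc k. (- lam) * cc k i * (Aop ^^ i) g a) = (\<Sum>i\<le>k. (- lam) * cc k i * (Aop ^^ i) g a)"
      by (simp add: cc_out)
    finally show ?thesis by simp
  qed
  finally show ?case .
qed

lemma Qpow_eq: "crystal_Qpow n \<beta> k a b = (\<Sum>i\<le>k. cc k i * Kp i a b)"
  by (simp add: Qpow_Bop Bop_binom Kp_def)

lemma exp_sums: "(\<lambda>j. x ^ j / fact j) sums exp (x::real)"
  using exp_converges[of x] by (simp add: divide_inverse_commute scaleR_conv_of_real)

lemma term_eq: assumes "i \<le> k"
  shows "d ^ k / fact k * (cc k i * K) = ((lam * d) ^ i / fact i * K) * ((- lam * d) ^ (k - i) / fact (k - i))"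
proof -
  have k: "k = i + (k - i)" using assms by simp
  have dk: "d ^ k = d ^ i * d ^ (k - i)" by (subst k) (simp add: power_add)
  have p1: "(- lam * d) ^ (k - i) = (- lam) ^ (k - i) * d ^ (k - i)" by (rule power_mult_distrib)
  have p2: "(lam * d) ^ i = lam ^ i * d ^ i" by (simp add: power_mult_distrib)
  have f: "fact k / (fact i * fact (k - i)) / fact k = 1 / (fact i * fact (k - i) :: real)" by simp
  show ?thesis unfolding cc_def binomial_fact[OF assms] p1 p2 dk
    by (simp add: field_simps)
qed

lemma summable_a: "summable (\<lambda>i. norm ((lam * d) ^ i / fact i * Kp i a b))"
proof (rule summable_comparison_test)
  show "\<exists>N. \<forall>i\<ge>N. norm (norm ((lam * d) ^ i / fact i * Kp i a b)) \<le> \<bar>lam * d\<bar> ^ i / fact i"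
    using Kp_bounds by (auto simp: abs_mult power_abs divide_simps intro!: mult_left_le)
  show "summable (\<lambda>i. \<bar>lam * d\<bar> ^ i / fact i)" using exp_sums by (rule sums_summable)
qed

lemma crystal_P_U: "crystal_P n \<beta> d a b = U d a b"
proof -
  let ?a = "\<lambda>i. (lam * d) ^ i / fact i * Kp i a b"
  let ?b = "\<lambda>j. (- lam * d) ^ j / fact j"
  have sb: "summable (\<lambda>j. norm (?b j))"
    using exp_sums[of "\<bar>lam * d\<bar>"] by (simp add: sums_summable power_abs abs_mult)
  have "crystal_P n \<beta> d a b = (\<Sum>k. \<Sum>i\<le>k. ?a i * ?b (k - i))"
    unfolding crystal_P_def Qpow_eq sum_distrib_left
    by (intro suminf_cong sum.cong refl) (rule term_eq, simp)
  also have "\<dots> = suminf ?a * suminf ?b"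
    using Cauchy_product[OF summable_a sb] by simp
  also have "suminf ?b = exp (- lam * d)" using exp_sums sums_unique by metis
  finally show ?thesis by (simp add: U_def)
qed

lemma U_bounds: assumes "0 \<le> d" shows "0 \<le> U d a b" "U d a b \<le> 1"
proof -
  let ?a = "\<lambda>i. (lam * d) ^ i / fact i * Kp i a b"
  have sa: "summable ?a" using summable_a by (rule summable_norm_cancel)
  have nn: "\<And>i. 0 \<le> ?a i" using assms lam_pos Kp_bounds by simp
  have le: "?a i \<le> (lam * d) ^ i / fact i" for i
    using Kp_bounds[of i a b] assms lam_pos by (intro mult_left_le) auto
  have sb: "summable (\<lambda>i. (lam * d) ^ i / fact i)" using exp_sums by (rule sums_summable)
  have "suminf ?a \<le> (\<Sum>i. (lam * d) ^ i / fact i)"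
    by (rule suminf_le[OF le sa sb])
  also have "\<dots> = exp (lam * d)" using exp_sums sums_unique by metis
  finally have "exp (- lam * d) * suminf ?a \<le> exp (- lam * d) * exp (lam * d)" by simp
  then show "U d a b \<le> 1" by (simp add: U_def exp_minus field_simps)
  show "0 \<le> U d a b" unfolding U_def using suminf_nonneg[OF sa nn] by simp
qed

end


context crys begin

lemma int_w: "(\<integral>\<^sup>+x. ennreal (w x) \<partial>count_space UNIV) = 1"
proof -
  have "(\<integral>\<^sup>+x. ennreal (w x) \<partial>count_space UNIV) = (\<Sum>x\<in>Marks. ennreal (w x))"
    by (rule nn_integral_count_space') (auto simp: w_def)
  also have "\<dots> = 1" using w_nonneg sum_w by simp
  finally show ?thesis .
qed

definition mu :: "(nat \<times> nat) pmf" where "mu = embed_pmf w"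

lemma pmf_mu: "pmf mu m = w m"
  unfolding mu_def by (rule pmf_embed_pmf[OF w_nonneg int_w])

lemma set_mu: "set_pmf mu \<subseteq> Marks"
  unfolding mu_def set_embed_pmf[OF w_nonneg int_w] by (auto simp: w_def)

lemma int_mu: "(\<integral>\<^sup>+m. f m \<partial>measure_pmf mu) = (\<Sum>m\<in>Marks. ennreal (w m) * f m)"
  using set_mu by (subst nn_integral_measure_pmf_support[of Marks]) (auto simp: pmf_mu mult.commute)

definition ed :: "real \<Rightarrow> real" where "ed = exponential_density lam"

lemma ed_nonneg: "0 \<le> ed e" unfolding ed_def using lam_pos by (simp add: exponential_density_nonneg)

lemma ed_meas[measurable]: "ed \<in> borel_measurable borel" unfolding ed_def by simp

definition Ex :: "real measure" where "Ex = density lborel (\<lambda>e. ennreal (ed e))"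

lemma prob_Ex: "prob_space Ex"
  unfolding Ex_def ed_def using prob_space_exponential_density[OF lam_pos] .

lemma sets_Ex[measurable_cong]: "sets Ex = sets borel" by (simp add: Ex_def)

definition Dm :: "(real \<times> (nat \<times> nat)) measure" where "Dm = Ex \<Otimes>\<^sub>M measure_pmf mu"

lemma prob_Dm: "prob_space Dm"
  unfolding Dm_def by (intro prob_space_pair prob_Ex prob_space_measure_pmf)

lemma space_Dm[simp]: "space Dm = UNIV"
  by (simp add: Dm_def space_pair_measure Ex_def)

lemma fst_meas[measurable]: "fst \<in> measurable Dm borel"
  unfolding Dm_def using measurable_fst[of Ex "measure_pmf mu"]
  by (simp add: measurable_cong_sets[OF refl sets_Ex])

lemma snd_meas[measurable]: "snd \<in> measurable Dm (count_space UNIV)"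
  unfolding Dm_def using measurable_snd[of Ex "measure_pmf mu"] by simp

lemma meas_Dm:
  assumes "\<And>m. (\<lambda>e. g (e, m)) \<in> borel_measurable borel"
  shows "g \<in> borel_measurable Dm"
proof -
  have "(\<lambda>x. (\<lambda>m x. g (fst x, m)) (snd x) x) \<in> borel_measurable Dm"
    by (rule measurable_compose_countable'[where I=UNIV]) (use assms in auto)
  then show ?thesis by simp
qed

lemma nn_int_Dm:
  assumes "\<And>m. (\<lambda>e. g (e, m)) \<in> borel_measurable borel"
  shows "(\<integral>\<^sup>+x. g x \<partial>Dm) = (\<integral>\<^sup>+e. ennreal (ed e) * (\<Sum>m\<in>Marks. ennreal (w m) * g (e, m)) \<partial>lborel)"
proof -
  have gm: "g \<in> borel_measurable (Ex \<Otimes>\<^sub>M measure_pmf mu)"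
    using meas_Dm[OF assms] by (simp add: Dm_def)
  have "(\<integral>\<^sup>+x. g x \<partial>Dm) = (\<integral>\<^sup>+e. \<integral>\<^sup>+m. g (e, m) \<partial>measure_pmf mu \<partial>Ex)"
    unfolding Dm_def by (rule measure_pmf.nn_integral_fst[OF gm, symmetric])
  also have "\<dots> = (\<integral>\<^sup>+e. (\<Sum>m\<in>Marks. ennreal (w m) * g (e, m)) \<partial>Ex)"
    by (simp add: int_mu)
  also have "\<dots> = (\<integral>\<^sup>+e. ennreal (ed e) * (\<Sum>m\<in>Marks. ennreal (w m) * g (e, m)) \<partial>lborel)"
    unfolding Ex_def using assms by (subst nn_integral_density) auto
  finally show ?thesis .
qed

definition Sm where "Sm = stream_space Dm"

lemma prob_Sm: "prob_space Sm"
  unfolding Sm_def using prob_space.prob_space_stream_space[OF prob_Dm] .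

definition hr :: "real \<Rightarrow> real" where "hr e = max 0 e"
definition hh :: "real \<times> (nat \<times> nat) \<Rightarrow> real" where "hh x = hr (fst x)"

lemma hr_nonneg: "0 \<le> hr e" by (simp add: hr_def)
lemma hh_nonneg: "0 \<le> hh x" by (simp add: hh_def hr_nonneg)

lemma hr_meas[measurable]: "hr \<in> borel_measurable borel" unfolding hr_def by simp
lemma hh_meas[measurable]: "hh \<in> borel_measurable Dm" unfolding hh_def by simp

definition T :: "nat \<Rightarrow> (real \<times> (nat \<times> nat)) stream \<Rightarrow> real" where
  "T k \<omega> = (\<Sum>i<k. hh (\<omega> !! i))"

lemma T_meas[measurable]: "T k \<in> borel_measurable Sm"
  unfolding T_def Sm_def by measurable

lemma T_0[simp]: "T 0 \<omega> = 0" by (simp add: T_def)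
lemma T_Suc_Stream: "T (Suc k) (x ## \<omega>) = hh x + T k \<omega>"
  unfolding T_def by (subst sum.lessThan_Suc_shift) simp

lemma T_Suc: "T (Suc k) \<omega> = T k \<omega> + hh (\<omega> !! k)" by (simp add: T_def)

lemma T_mono: "k \<le> k' \<Longrightarrow> T k \<omega> \<le> T k' \<omega>"
  unfolding T_def by (rule sum_mono2) (auto simp: hh_nonneg)

lemma T_nonneg: "0 \<le> T k \<omega>" unfolding T_def by (simp add: sum_nonneg hh_nonneg)

definition Good :: "(real \<times> (nat \<times> nat)) stream \<Rightarrow> bool" where
  "Good \<omega> = (\<forall>N::nat. \<exists>k. real N < T k \<omega>)"

lemma Good_meas[measurable]: "Measurable.pred Sm Good"
  unfolding Good_def by measurable

lemma Good_iff: "Good \<omega> \<longleftrightarrow> (\<forall>r. \<exists>k. r < T k \<omega>)"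
proof
  assume G: "Good \<omega>"
  show "\<forall>r. \<exists>k. r < T k \<omega>"
  proof
    fix r :: real
    obtain N :: nat where "r < real N" using reals_Archimedean2 by blast
    moreover obtain k where "real N < T k \<omega>" using G unfolding Good_def by blast
    ultimately show "\<exists>k. r < T k \<omega>" by (intro exI[of _ k]) simp
  qed
qed (auto simp: Good_def)

lemma Good_Stream: "Good (x ## \<omega>) \<longleftrightarrow> Good \<omega>"
proof
  assume G: "Good (x ## \<omega>)"
  show "Good \<omega>" unfolding Good_iff
  proof
    fix r
    obtain k where k: "\<bar>r\<bar> + hh x < T k (x ## \<omega>)" using G unfolding Good_iff by blast
    then have "k \<noteq> 0" using hh_nonneg[of x] by (cases k) auto
    then obtain k' where "k = Suc k'" by (cases k) auto
    with k have "r < T k' \<omega>" by (simp add: T_Suc_Stream)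
    then show "\<exists>k. r < T k \<omega>" ..
  qed
next
  assume G: "Good \<omega>"
  show "Good (x ## \<omega>)" unfolding Good_iff
  proof
    fix r
    obtain k where k: "r < T k \<omega>" using G unfolding Good_iff by blast
    then have "r < T (Suc k) (x ## \<omega>)" using hh_nonneg[of x] by (simp add: T_Suc_Stream)
    then show "\<exists>k. r < T k (x ## \<omega>)" ..
  qed
qed

primrec St :: "nat \<Rightarrow> (nat \<Rightarrow> nat) \<Rightarrow> (real \<times> (nat \<times> nat)) stream \<Rightarrow> (nat \<Rightarrow> nat)" where
  "St 0 a \<omega> = a"
| "St (Suc k) a \<omega> = St k (upd a (snd (shd \<omega>))) (stl \<omega>)"

lemma St_meas: "St k a \<in> measurable Sm (count_space UNIV)"
proof (induction k arbitrary: a)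
  case 0 then show ?case by simp
next
  case (Suc k)
  have "(\<lambda>\<omega>. (\<lambda>m \<omega>. St k (upd a m) (stl \<omega>)) (snd (shd \<omega>)) \<omega>) \<in> measurable Sm (count_space UNIV)"
  proof (rule measurable_compose_countable'[where I=UNIV and f="\<lambda>m \<omega>. St k (upd a m) (stl \<omega>)" and g="\<lambda>\<omega>. snd (shd \<omega>)"])
    fix m
    show "(\<lambda>\<omega>. St k (upd a m) (stl \<omega>)) \<in> measurable Sm (count_space UNIV)"
      unfolding Sm_def by (rule measurable_compose[OF measurable_stl]) (rule Suc.IH[unfolded Sm_def])
    show "(\<lambda>\<omega>. snd (shd \<omega>)) \<in> measurable Sm (count_space UNIV)"
      unfolding Sm_def by measurable
  qed simp
  then show ?case by simp
qed

definition Xp :: "real \<Rightarrow> (nat \<Rightarrow> nat) \<Rightarrow> (real \<times> (nat \<times> nat)) stream \<Rightarrow> (nat \<Rightarrow> nat)" where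
  "Xp t a \<omega> = (if Good \<omega> then St (LEAST k. t < T (Suc k) \<omega>) a \<omega> else a)"

lemma Xp_meas: "Xp t a \<in> measurable Sm (count_space UNIV)"
proof -
  have "(\<lambda>\<omega>. (\<lambda>k \<omega>. if Good \<omega> then St k a \<omega> else a) (LEAST k. t < T (Suc k) \<omega>) \<omega>) \<in> measurable Sm (count_space UNIV)"
  proof (rule measurable_compose_countable'[where I=UNIV])
    fix k
    show "(\<lambda>\<omega>. if Good \<omega> then St k a \<omega> else a) \<in> measurable Sm (count_space UNIV)"
      using St_meas[of k a] by measurable
    show "(\<lambda>\<omega>. LEAST k. t < T (Suc k) \<omega>) \<in> measurable Sm (count_space UNIV)"
      by measurable
  qed simp
  then show ?thesis unfolding Xp_def by simp
qed

lemma Xp_Stream: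
  assumes G: "Good \<omega>"
  shows "Xp t a (x ## \<omega>) = (if t < hh x then a else Xp (t - hh x) (upd a (snd x)) \<omega>)"
proof -
  have G': "Good (x ## \<omega>)" using G Good_Stream by simp
  show ?thesis
  proof (cases "t < hh x")
    case True
    then have "(LEAST k. t < T (Suc k) (x ## \<omega>)) = 0"
      by (intro Least_eq_0) (simp add: T_Suc_Stream)
    then show ?thesis using True G' by (simp add: Xp_def)
  next
    case False
    obtain k where k: "t < T k (x ## \<omega>)" using G' unfolding Good_iff by blast
    then have ex: "t < T (Suc k) (x ## \<omega>)" using T_mono[of k "Suc k" "x ## \<omega>"] by simp
    have eq: "\<And>m. t < T (Suc (Suc m)) (x ## \<omega>) \<longleftrightarrow> t - hh x < T (Suc m) \<omega>"
      by (simp add: T_Suc_Stream algebra_simps)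
    have "(LEAST k. t < T (Suc k) (x ## \<omega>)) = Suc (LEAST m. t < T (Suc (Suc m)) (x ## \<omega>))"
      by (rule Least_Suc[of "\<lambda>k. t < T (Suc k) (x ## \<omega>)", OF ex]) (use False in \<open>simp add: T_Suc_Stream\<close>)
    also have "\<dots> = Suc (LEAST m. t - hh x < T (Suc m) \<omega>)" by (simp add: eq)
    finally show ?thesis using False G G' by (simp add: Xp_def)
  qed
qed

end


context crys begin

lemma int_expdens: assumes "0 < l" shows "(\<integral>\<^sup>+e. ennreal (exponential_density l e) \<partial>lborel) = 1"
proof -
  have "emeasure (density lborel (\<lambda>e. ennreal (exponential_density l e))) UNIV = 1"
    using prob_space.emeasure_space_1[OF prob_space_exponential_density[OF assms]] by simp
  then show ?thesis by (subst (asm) emeasure_density) auto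
qed

definition cexp :: real where "cexp = lam / (lam + 1)"

lemma cexp_bounds: "0 \<le> cexp" "cexp < 1" using lam_pos by (auto simp: cexp_def)

lemma int_exp_hh: "(\<integral>\<^sup>+x. ennreal (exp (- hh x)) \<partial>Dm) = ennreal cexp"
proof -
  have "(\<integral>\<^sup>+x. ennreal (exp (- hh x)) \<partial>Dm)
      = (\<integral>\<^sup>+e. ennreal (ed e) * (\<Sum>m\<in>Marks. ennreal (w m) * ennreal (exp (- hr e))) \<partial>lborel)"
    using nn_int_Dm[of "\<lambda>x. ennreal (exp (- hh x))"] by (simp add: hh_def)
  also have "\<dots> = (\<integral>\<^sup>+e. ennreal cexp * ennreal (exponential_density (lam + 1) e) \<partial>lborel)"
  proof (rule nn_integral_cong)
    fix e :: real
    have "(\<Sum>m\<in>Marks. ennreal (w m) * ennreal (exp (- hr e))) = ennreal (exp (- hr e))"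
      using w_nonneg sum_w by (simp add: sum_distrib_right[symmetric] ennreal_mult'[symmetric])
    moreover have "ed e * exp (- hr e) = cexp * exponential_density (lam + 1) e"
    proof (cases "e < 0")
      case True then show ?thesis by (simp add: ed_def exponential_density_def hr_def)
    next
      case False
      have h: "hr e = e" using False by (simp add: hr_def)
      have x: "exp (- e * lam) * exp (- e) = exp (- e * (lam + 1))"
        by (simp add: exp_add[symmetric] algebra_simps)
      have c: "cexp * (lam + 1) = lam" using lam_pos by (simp add: cexp_def)
      have "cexp * ((lam + 1) * exp (- e * (lam + 1))) = (cexp * (lam + 1)) * exp (- e * (lam + 1))"
        by (simp only: mult.assoc)
      also have "\<dots> = lam * exp (- e * lam) * exp (- e)" by (simp only: c x[symmetric] mult.assoc)
      finally show ?thesis using False unfolding ed_def exponential_density_def h by simp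
    qed
    ultimately show "ennreal (ed e) * (\<Sum>m\<in>Marks. ennreal (w m) * ennreal (exp (- hr e)))
        = ennreal cexp * ennreal (exponential_density (lam + 1) e)" 
    proof -
      assume s1: "(\<Sum>m\<in>Marks. ennreal (w m) * ennreal (exp (- hr e))) = ennreal (exp (- hr e))"
        and s2: "ed e * exp (- hr e) = cexp * exponential_density (lam + 1) e"
      have "ennreal (ed e) * ennreal (exp (- hr e)) = ennreal (ed e * exp (- hr e))"
        using ed_nonneg by (simp add: ennreal_mult')
      also have "\<dots> = ennreal cexp * ennreal (exponential_density (lam + 1) e)"
        unfolding s2 using cexp_bounds(1) by (rule ennreal_mult')
      finally show ?thesis unfolding s1 .
    qed
  qed
  also have "\<dots> = ennreal cexp * (\<integral>\<^sup>+e. ennreal (exponential_density (lam + 1) e) \<partial>lborel)"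
    by (rule nn_integral_cmult) simp
  also have "\<dots> = ennreal cexp" using lam_pos by (simp add: int_expdens)
  finally show ?thesis .
qed

lemma int_exp_T: "(\<integral>\<^sup>+\<omega>. ennreal (exp (- T k \<omega>)) \<partial>Sm) = ennreal cexp ^ k"
proof (induction k)
  case 0 then show ?case using prob_space.emeasure_space_1[OF prob_Sm] by simp
next
  case (Suc k)
  interpret D: prob_space Dm by (rule prob_Dm)
  have "(\<integral>\<^sup>+\<omega>. ennreal (exp (- T (Suc k) \<omega>)) \<partial>Sm)
      = (\<integral>\<^sup>+x. \<integral>\<^sup>+\<omega>. ennreal (exp (- T (Suc k) (x ## \<omega>))) \<partial>Sm \<partial>Dm)"
  proof -
    have [measurable]: "T (Suc k) \<in> borel_measurable (stream_space Dm)" using T_meas unfolding Sm_def .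
    show ?thesis unfolding Sm_def by (rule D.nn_integral_stream_space) measurable
  qed
  also have "\<dots> = (\<integral>\<^sup>+x. \<integral>\<^sup>+\<omega>. ennreal (exp (- hh x)) * ennreal (exp (- T k \<omega>)) \<partial>Sm \<partial>Dm)"
  proof (intro nn_integral_cong)
    fix x \<omega>
    have "exp (- T (Suc k) (x ## \<omega>)) = exp (- hh x) * exp (- T k \<omega>)"
      by (simp add: T_Suc_Stream exp_add[symmetric])
    then show "ennreal (exp (- T (Suc k) (x ## \<omega>))) = ennreal (exp (- hh x)) * ennreal (exp (- T k \<omega>))"
      by (simp add: ennreal_mult')
  qed
  also have "\<dots> = (\<integral>\<^sup>+x. ennreal (exp (- hh x)) * (\<integral>\<^sup>+\<omega>. ennreal (exp (- T k \<omega>)) \<partial>Sm) \<partial>Dm)"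
    by (intro nn_integral_cong nn_integral_cmult) measurable
  also have "\<dots> = (\<integral>\<^sup>+x. ennreal (exp (- hh x)) \<partial>Dm) * ennreal cexp ^ k"
    by (simp add: Suc nn_integral_multc)
  finally show ?case by (simp add: int_exp_hh)
qed

lemma bounded_null:
  "emeasure Sm {\<omega>\<in>space Sm. \<forall>k. T k \<omega> \<le> real B} = 0"
proof -
  interpret S: prob_space Sm by (rule prob_Sm)
  let ?E = "{\<omega>\<in>space Sm. \<forall>k. T k \<omega> \<le> real B}"
  have E: "?E \<in> sets Sm" by measurable
  have le: "S.prob ?E \<le> exp (real B) * cexp ^ k" for k
  proof -
    have "emeasure Sm ?E \<le> emeasure Sm {\<omega>\<in>space Sm. T k \<omega> \<le> real B}"
      by (rule emeasure_mono) (auto, measurable)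
    also have "\<dots> = (\<integral>\<^sup>+\<omega>. indicator {\<omega>\<in>space Sm. T k \<omega> \<le> real B} \<omega> \<partial>Sm)"
      by (rule nn_integral_indicator[symmetric]) measurable
    also have "\<dots> \<le> (\<integral>\<^sup>+\<omega>. ennreal (exp (real B)) * ennreal (exp (- T k \<omega>)) \<partial>Sm)"
    proof (rule nn_integral_mono)
      fix \<omega> assume "\<omega> \<in> space Sm"
      show "indicator {\<omega>\<in>space Sm. T k \<omega> \<le> real B} \<omega> \<le> ennreal (exp (real B)) * ennreal (exp (- T k \<omega>))"
      proof (cases "T k \<omega> \<le> real B")
        case True
        have e1: "exp (real B) * exp (- T k \<omega>) = exp (real B + - T k \<omega>)"
          by (rule exp_add[symmetric])
        have "1 \<le> exp (real B + - T k \<omega>)" using True by simp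
        then have "ennreal 1 \<le> ennreal (exp (real B) * exp (- T k \<omega>))"
          unfolding e1 by (rule ennreal_leI)
        also have "\<dots> = ennreal (exp (real B)) * ennreal (exp (- T k \<omega>))"
          by (rule ennreal_mult') simp
        finally show ?thesis using True \<open>\<omega> \<in> space Sm\<close> by (simp add: indicator_def)
      qed (simp add: indicator_def)
    qed
    also have "\<dots> = ennreal (exp (real B)) * (\<integral>\<^sup>+\<omega>. ennreal (exp (- T k \<omega>)) \<partial>Sm)"
      by (rule nn_integral_cmult) measurable
    also have "\<dots> = ennreal (exp (real B)) * ennreal cexp ^ k"
      by (simp only: int_exp_T)
    also have "\<dots> = ennreal (exp (real B) * cexp ^ k)"
      using cexp_bounds by (simp only: ennreal_mult' ennreal_power zero_le_power exp_ge_zero)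
    finally have "ennreal (S.prob ?E) \<le> ennreal (exp (real B) * cexp ^ k)"
      by (simp only: S.emeasure_eq_measure)
    then show ?thesis using cexp_bounds by (subst (asm) ennreal_le_iff) auto
  qed
  have lim: "(\<lambda>k. exp (real B) * cexp ^ k) \<longlonglongrightarrow> 0"
    using cexp_bounds by (intro tendsto_mult_right_zero LIMSEQ_power_zero) simp
  have "S.prob ?E \<le> 0" by (rule LIMSEQ_le_const[OF lim]) (use le in auto)
  then have "S.prob ?E = 0" using measure_nonneg[of Sm ?E] by simp
  then show ?thesis by (simp add: S.emeasure_eq_measure)
qed

lemma AE_Good: "AE \<omega> in Sm. Good \<omega>"
proof -
  have "AE \<omega> in Sm. \<not> (\<forall>k. T k \<omega> \<le> real B)" for B
  proof -
    have "{\<omega>\<in>space Sm. \<forall>k. T k \<omega> \<le> real B} \<in> null_sets Sm"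
      by (rule null_setsI[OF bounded_null]) measurable
    from AE_not_in[OF this] AE_space show ?thesis by eventually_elim blast
  qed
  then have "AE \<omega> in Sm. \<forall>B::nat. \<not> (\<forall>k. T k \<omega> \<le> real B)" by (simp add: AE_all_countable)
  then show ?thesis by eventually_elim (auto simp: Good_def not_le)
qed

definition A :: "(nat \<Rightarrow> nat) \<Rightarrow> real \<Rightarrow> (real \<times> (nat \<Rightarrow> nat)) list \<Rightarrow> (real \<times> (nat \<times> nat)) stream set" where
  "A a s zs = {\<omega>\<in>space Sm. Good \<omega> \<and> (\<forall>p\<in>set zs. Xp (fst p - s) a \<omega> = snd p)}"

lemma A_sets[measurable]: "A a s zs \<in> sets Sm"
proof -
  have [measurable]: "Xp t b \<in> measurable Sm (count_space UNIV)" for t b by (rule Xp_meas)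
  show ?thesis unfolding A_def by measurable
qed

lemma A_sets'[measurable]: "A a s zs \<in> sets (stream_space Dm)"
  using A_sets by (simp add: Sm_def)

definition G :: "(nat \<Rightarrow> nat) \<Rightarrow> real \<Rightarrow> (real \<times> (nat \<Rightarrow> nat)) list \<Rightarrow> ennreal" where
  "G a s zs = emeasure Sm (A a s zs)"

lemma G_Nil: "G a s [] = 1"
proof -
  interpret S: prob_space Sm by (rule prob_Sm)
  have "G a s [] = emeasure Sm (space Sm)"
    unfolding G_def A_def using AE_Good by (intro emeasure_eq_AE) auto
  then show ?thesis by (simp add: S.emeasure_space_1)
qed

lemma G_le1: "G a s zs \<le> 1"
proof -
  interpret S: prob_space Sm by (rule prob_Sm)
  show ?thesis unfolding G_def by (rule S.emeasure_le_1)
qed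

definition condf :: "(nat \<Rightarrow> nat) \<Rightarrow> real \<Rightarrow> (real \<times> (nat \<Rightarrow> nat)) list \<Rightarrow> real \<Rightarrow> bool" where
  "condf a s zs e = (\<forall>p\<in>set zs. fst p - s < hr e \<longrightarrow> snd p = a)"

definition fl :: "real \<Rightarrow> (real \<times> (nat \<Rightarrow> nat)) list \<Rightarrow> real \<Rightarrow> (real \<times> (nat \<Rightarrow> nat)) list" where
  "fl s zs e = filter (\<lambda>p. s + hr e \<le> fst p) zs"

definition PhiG where
  "PhiG a s zs x = (if condf a s zs (fst x) then G (upd a (snd x)) (s + hh x) (fl s zs (fst x)) else 0)"

lemma section_A:
  "{\<omega>\<in>space Sm. x ## \<omega> \<in> A a s zs}
   = (if condf a s zs (fst x) then A (upd a (snd x)) (s + hh x) (fl s zs (fst x)) else {})"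
proof -
  have sp: "x ## \<omega> \<in> space Sm \<longleftrightarrow> \<omega> \<in> space Sm" for \<omega>
    by (simp add: Sm_def stream_space_Stream)
  have key: "(\<forall>p\<in>set zs. Xp (fst p - s) a (x ## \<omega>) = snd p) \<longleftrightarrow>
      condf a s zs (fst x) \<and> (\<forall>p\<in>set (fl s zs (fst x)). Xp (fst p - (s + hh x)) (upd a (snd x)) \<omega> = snd p)"
    if "Good \<omega>" for \<omega>
    using that by (auto simp: Xp_Stream condf_def fl_def hh_def diff_diff_eq)
  show ?thesis
  proof (rule set_eqI)
    fix \<omega>
    show "\<omega> \<in> {\<omega>\<in>space Sm. x ## \<omega> \<in> A a s zs} \<longleftrightarrow>
      \<omega> \<in> (if condf a s zs (fst x) then A (upd a (snd x)) (s + hh x) (fl s zs (fst x)) else {})"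
      by (cases "Good \<omega>") (simp_all add: A_def sp Good_Stream key)
  qed
qed

lemma PhiG_eq: "PhiG a s zs x = emeasure Sm {\<omega>\<in>space Sm. x ## \<omega> \<in> A a s zs}"
  unfolding PhiG_def G_def section_A by simp

lemma PhiG_meas: "PhiG a s zs \<in> borel_measurable Dm"
proof -
  interpret S: prob_space Sm by (rule prob_Sm)
  have eq: "PhiG a s zs x = (\<integral>\<^sup>+\<omega>. indicator (A a s zs) (x ## \<omega>) \<partial>Sm)" for x
  proof -
    have "(\<integral>\<^sup>+\<omega>. indicator (A a s zs) (x ## \<omega>) \<partial>Sm)
        = (\<integral>\<^sup>+\<omega>. indicator {\<omega>\<in>space Sm. x ## \<omega> \<in> A a s zs} \<omega> \<partial>Sm)"
      by (rule nn_integral_cong) (auto split: split_indicator)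
    also have "\<dots> = emeasure Sm {\<omega>\<in>space Sm. x ## \<omega> \<in> A a s zs}"
      by (rule nn_integral_indicator) (simp add: Sm_def)
    finally show ?thesis by (simp add: PhiG_eq)
  qed
  have m: "(\<lambda>p. indicator (A a s zs) (fst p ## snd p) :: ennreal) \<in> borel_measurable (Dm \<Otimes>\<^sub>M Sm)"
    unfolding Sm_def by measurable
  have "(\<lambda>x. \<integral>\<^sup>+\<omega>. indicator (A a s zs) (x ## \<omega>) \<partial>Sm) \<in> borel_measurable Dm"
    using S.borel_measurable_nn_integral[of "\<lambda>x \<omega>. indicator (A a s zs) (x ## \<omega>)" Dm] m
    by (simp add: case_prod_beta')
  then show ?thesis by (simp add: eq[abs_def])
qed

lemma EG: "G a s zs = (\<integral>\<^sup>+x. PhiG a s zs x \<partial>Dm)"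
proof -
  interpret D: prob_space Dm by (rule prob_Dm)
  have "G a s zs = (\<integral>\<^sup>+x. emeasure Sm {\<omega>\<in>space Sm. x ## \<omega> \<in> A a s zs} \<partial>Dm)"
    unfolding G_def Sm_def by (rule D.emeasure_stream_space) simp
  then show ?thesis by (simp add: PhiG_eq)
qed

end


context crys begin

lemma summable_c: "summable (\<lambda>i. (lam * x) ^ i / fact i * Kp i a b)"
  using summable_a by (rule summable_norm_cancel)

lemma summable_cS: "summable (\<lambda>i. (lam * x) ^ i / fact i * Kp (Suc i) a b)"
proof (rule summable_comparison_test)
  show "\<exists>N. \<forall>i\<ge>N. norm ((lam * x) ^ i / fact i * Kp (Suc i) a b) \<le> \<bar>lam * x\<bar> ^ i / fact i"
    using Kp_bounds by (auto simp: abs_mult power_abs divide_simps intro!: mult_left_le)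
  show "summable (\<lambda>i. \<bar>lam * x\<bar> ^ i / fact i)" using exp_sums by (rule sums_summable)
qed

lemma sumU: "(\<Sum>m\<in>Marks. w m * U x (upd a m) b) = exp (- lam * x) * (\<Sum>i. (lam * x) ^ i / fact i * Kp (Suc i) a b)"
proof -
  have "(\<Sum>m\<in>Marks. w m * U x (upd a m) b)
      = exp (- lam * x) * (\<Sum>m\<in>Marks. (\<Sum>i. w m * ((lam * x) ^ i / fact i * Kp i (upd a m) b)))"
    unfolding U_def sum_distrib_left
    by (intro sum.cong refl, subst suminf_mult[OF summable_c]) (simp only: mult.left_commute)
  also have "(\<Sum>m\<in>Marks. (\<Sum>i. w m * ((lam * x) ^ i / fact i * Kp i (upd a m) b)))
      = (\<Sum>i. \<Sum>m\<in>Marks. w m * ((lam * x) ^ i / fact i * Kp i (upd a m) b))"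
    by (rule suminf_sum[symmetric]) (intro summable_mult summable_c)
  also have "\<dots> = (\<Sum>i. (lam * x) ^ i / fact i * Kp (Suc i) a b)"
    by (intro suminf_cong) (simp add: Kp_Suc sum_distrib_left algebra_simps)
  finally show ?thesis .
qed

lemma U_meas[measurable]: "(\<lambda>d. U d a b) \<in> borel_measurable borel"
  unfolding U_def by measurable

definition kterm :: "real \<Rightarrow> (nat \<Rightarrow> nat) \<Rightarrow> (nat \<Rightarrow> nat) \<Rightarrow> nat \<Rightarrow> real \<Rightarrow> real" where
  "kterm d a b i e = lam * exp (- lam * d) * ((lam * (d - e)) ^ i / fact i * Kp (Suc i) a b)"

lemma kterm_nonneg: "e \<le> d \<Longrightarrow> 0 \<le> kterm d a b i e"
  unfolding kterm_def using lam_pos Kp_bounds[of "Suc i" a b] by simp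

lemma kterm_sum: "summable (\<lambda>i. kterm d a b i e)"
  unfolding kterm_def by (intro summable_mult summable_cS)

lemma pointwise_EU:
  assumes "0 \<le> e" "e \<le> d"
  shows "ennreal (ed e) * (\<Sum>m\<in>Marks. ennreal (w m) * ennreal (U (d - hr e) (upd a m) b))
       = (\<Sum>i. ennreal (kterm d a b i e))"
proof -
  have he: "hr e = e" using assms by (simp add: hr_def)
  have "(\<Sum>m\<in>Marks. ennreal (w m) * ennreal (U (d - e) (upd a m) b))
      = ennreal (\<Sum>m\<in>Marks. w m * U (d - e) (upd a m) b)"
    using w_nonneg U_bounds(1)[of "d - e"] assms
    by (subst sum_ennreal[symmetric]) (auto intro!: sum_nonneg simp: ennreal_mult')
  also have "\<dots> = ennreal (exp (- lam * (d - e)) * (\<Sum>i. (lam * (d - e)) ^ i / fact i * Kp (Suc i) a b))"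
    by (simp add: sumU)
  finally have s: "(\<Sum>m\<in>Marks. ennreal (w m) * ennreal (U (d - e) (upd a m) b)) = \<dots>" .
  have "ennreal (ed e) * ennreal (exp (- lam * (d - e)) * (\<Sum>i. (lam * (d - e)) ^ i / fact i * Kp (Suc i) a b))
     = ennreal (ed e * (exp (- lam * (d - e)) * (\<Sum>i. (lam * (d - e)) ^ i / fact i * Kp (Suc i) a b)))"
    using ed_nonneg by (rule ennreal_mult'[symmetric])
  also have "ed e * (exp (- lam * (d - e)) * (\<Sum>i. (lam * (d - e)) ^ i / fact i * Kp (Suc i) a b))
      = (\<Sum>i. kterm d a b i e)"
  proof -
    have "ed e * exp (- lam * (d - e)) = lam * exp (- lam * d)"
      using assms by (simp add: ed_def exponential_density_def exp_add[symmetric] algebra_simps)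
    then show ?thesis unfolding kterm_def
      by (subst suminf_mult[OF summable_cS]) (simp add: mult.assoc[symmetric])
  qed
  also have "ennreal (\<Sum>i. kterm d a b i e) = (\<Sum>i. ennreal (kterm d a b i e))"
    using kterm_nonneg[OF assms(2)] kterm_sum by (rule suminf_ennreal2[symmetric])
  finally show ?thesis unfolding he s .
qed

lemma int_kterm:
  assumes "0 \<le> d"
  shows "(\<integral>\<^sup>+e. ennreal (kterm d a b i e) * indicator {0..d} e \<partial>lborel)
       = ennreal (exp (- lam * d) * Kp (Suc i) a b * (lam * d) ^ Suc i / fact (Suc i))"
proof -
  define cF where "cF = - (exp (- lam * d) * Kp (Suc i) a b / fact (Suc i))"
  define F where "F e = cF * (lam * (d - e)) ^ Suc i" for e
  have D: "DERIV F e :> kterm d a b i e" for e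
  proof -
    have "DERIV (\<lambda>e. (lam * (d - e)) ^ Suc i) e :> (1 + of_nat i) * (- lam * (lam * (d - e)) ^ i)"
      by (rule DERIV_power_Suc) (auto intro!: derivative_eq_intros)
    then have "DERIV F e :> cF * ((1 + of_nat i) * (- lam * (lam * (d - e)) ^ i))"
      unfolding F_def[abs_def] by (rule DERIV_cmult)
    also have "cF * ((1 + of_nat i) * (- lam * (lam * (d - e)) ^ i)) = kterm d a b i e"
    proof -
      have aux: "- (E * K / (c * f)) * (c * (- l * P)) = l * E * (P / f * K)"
        if "c \<noteq> 0" "f \<noteq> 0" for E K c f l P :: real using that by (simp add: field_simps)
      have f: "fact (Suc i) = (1 + of_nat i) * (fact i :: real)" by (simp add: fact_Suc)
      show ?thesis unfolding kterm_def cF_def f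
        by (rule aux) auto
    qed
    finally show ?thesis .
  qed
  have "(\<integral>\<^sup>+e. ennreal (kterm d a b i e) * indicator {0..d} e \<partial>lborel) = ennreal (F d - F 0)"
  proof (rule nn_integral_FTC_Icc)
    show "kterm d a b i \<in> borel_measurable borel" unfolding kterm_def by measurable
  next
    fix e :: real assume "e \<in> {0..d}"
    show "DERIV F e :> kterm d a b i e" by (rule D)
  next
    fix e :: real assume "e \<in> {0..d}"
    then show "0 \<le> kterm d a b i e" by (intro kterm_nonneg) simp
  qed (rule assms)
  also have "F d - F 0 = exp (- lam * d) * Kp (Suc i) a b * (lam * d) ^ Suc i / fact (Suc i)"
    by (simp add: F_def cF_def)
  finally show ?thesis .
qed

end


context crys begin

lemma EU: assumes d: "0 \<le> d"
  shows "ennreal (U d a b) = ennreal (exp (- lam * d) * (if a = b then 1 else 0))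
    + (\<integral>\<^sup>+e. ennreal (ed e) * indicator {..d} e * (\<Sum>m\<in>Marks. ennreal (w m) * ennreal (U (d - hr e) (upd a m) b)) \<partial>lborel)"
proof -
  let ?S = "\<lambda>i. exp (- lam * d) * Kp (Suc i) a b * (lam * d) ^ Suc i / fact (Suc i)"
  have Snn: "0 \<le> ?S i" for i using d lam_pos Kp_bounds[of "Suc i" a b] by simp
  have "summable (\<lambda>i. exp (- lam * d) * ((lam * d) ^ Suc i / fact (Suc i) * Kp (Suc i) a b))"
    by (intro summable_mult) (rule summable_Suc_iff[THEN iffD2, OF summable_c])
  then have summS: "summable ?S" by (simp add: algebra_simps)
  have "(\<integral>\<^sup>+e. ennreal (ed e) * indicator {..d} e * (\<Sum>m\<in>Marks. ennreal (w m) * ennreal (U (d - hr e) (upd a m) b)) \<partial>lborel)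
      = (\<integral>\<^sup>+e. (\<Sum>i. ennreal (kterm d a b i e) * indicator {0..d} e) \<partial>lborel)"
  proof (rule nn_integral_cong)
    fix e :: real
    show "ennreal (ed e) * indicator {..d} e * (\<Sum>m\<in>Marks. ennreal (w m) * ennreal (U (d - hr e) (upd a m) b))
        = (\<Sum>i. ennreal (kterm d a b i e) * indicator {0..d} e)"
    proof (cases "0 \<le> e \<and> e \<le> d")
      case True
      then show ?thesis using pointwise_EU[of e d a b] by (simp add: indicator_def)
    next
      case False
      then show ?thesis by (auto simp: indicator_def ed_def exponential_density_def)
    qed
  qed
  also have "\<dots> = (\<Sum>i. \<integral>\<^sup>+e. ennreal (kterm d a b i e) * indicator {0..d} e \<partial>lborel)"
    by (rule nn_integral_suminf) (unfold kterm_def, measurable)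
  also have "\<dots> = (\<Sum>i. ennreal (?S i))"
    using int_kterm[OF d] by simp
  also have "\<dots> = ennreal (\<Sum>i. ?S i)"
    using Snn summS by (rule suminf_ennreal2)
  finally have I: "(\<integral>\<^sup>+e. ennreal (ed e) * indicator {..d} e * (\<Sum>m\<in>Marks. ennreal (w m) * ennreal (U (d - hr e) (upd a m) b)) \<partial>lborel)
     = ennreal (\<Sum>i. ?S i)" .
  let ?t = "\<lambda>i. (lam * d) ^ i / fact i * Kp i a b"
  have sp: "(\<Sum>i. ?t i) = ?t 0 + (\<Sum>i. ?t (Suc i))"
    using suminf_split_head[OF summable_c] by simp
  have "U d a b = exp (- lam * d) * ?t 0 + exp (- lam * d) * (\<Sum>i. ?t (Suc i))"
    unfolding U_def sp by (simp add: distrib_left)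
  also have "exp (- lam * d) * (\<Sum>i. ?t (Suc i)) = (\<Sum>i. exp (- lam * d) * ?t (Suc i))"
    by (rule suminf_mult[symmetric]) (rule summable_Suc_iff[THEN iffD2, OF summable_c])
  also have "(\<Sum>i. exp (- lam * d) * ?t (Suc i)) = (\<Sum>i. ?S i)"
    by (intro suminf_cong) (simp add: algebra_simps)
  finally have U: "U d a b = exp (- lam * d) * (if a = b then 1 else 0) + (\<Sum>i. ?S i)"
    by (simp add: Kp_0)
  have S0: "0 \<le> (\<Sum>i. ?S i)" using summS Snn by (rule suminf_nonneg)
  show ?thesis unfolding I U using S0 by (simp add: ennreal_plus)
qed

end


context crys begin

fun Cf :: "(nat \<Rightarrow> nat) \<Rightarrow> real \<Rightarrow> (real \<times> (nat \<Rightarrow> nat)) list \<Rightarrow> real" where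
  "Cf a s [] = 1"
| "Cf a s (p # zs) = U (fst p - s) a (snd p) * Cf (snd p) (fst p) zs"

definition valid :: "real \<Rightarrow> (real \<times> (nat \<Rightarrow> nat)) list \<Rightarrow> bool" where
  "valid s zs \<longleftrightarrow> sorted_wrt (\<lambda>p q. fst p < fst q) zs \<and> (\<forall>p\<in>set zs. s \<le> fst p)"

lemma valid_ConsD: "valid s (p # zs) \<Longrightarrow> s \<le> fst p \<and> valid (fst p) zs \<and> (\<forall>q\<in>set zs. fst p < fst q)"
  unfolding valid_def by auto

lemma Cf_bounds: "valid s zs \<Longrightarrow> 0 \<le> Cf a s zs \<and> Cf a s zs \<le> 1"
proof (induction zs arbitrary: a s)
  case Nil then show ?case by simp
next
  case (Cons p zs)
  from valid_ConsD[OF Cons.prems] have v: "s \<le> fst p" "valid (fst p) zs" by auto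
  have u: "0 \<le> U (fst p - s) a (snd p)" "U (fst p - s) a (snd p) \<le> 1" using U_bounds v(1) by auto
  have c: "0 \<le> Cf (snd p) (fst p) zs" "Cf (snd p) (fst p) zs \<le> 1" using Cons.IH[OF v(2)] by auto
  show ?case using u c by (simp add: mult_le_one)
qed

lemma Cf_meas:
  assumes [measurable]: "og \<in> borel_measurable borel" "pp \<in> borel_measurable borel"
  shows "(\<lambda>e. Cf b (og e) (filter (\<lambda>q. pp e \<le> fst q) zs)) \<in> borel_measurable borel"
  using assms
proof (induction zs arbitrary: b og)
  case Nil then show ?case by simp
next
  case (Cons q zs)
  have [measurable]: "(\<lambda>e. Cf (snd q) (fst q) (filter (\<lambda>q. pp e \<le> fst q) zs)) \<in> borel_measurable borel"
    using Cons.IH[of "\<lambda>_. fst q" "snd q"] Cons.prems by simp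
  have [measurable]: "(\<lambda>e. Cf b (og e) (filter (\<lambda>q. pp e \<le> fst q) zs)) \<in> borel_measurable borel"
    using Cons.IH[of og b] Cons.prems by simp
  have [measurable]: "og \<in> borel_measurable borel" using Cons.prems by simp
  have eq: "(\<lambda>e. Cf b (og e) (filter (\<lambda>q. pp e \<le> fst q) (q # zs)))
     = (\<lambda>e. if pp e \<le> fst q then U (fst q - og e) b (snd q) * Cf (snd q) (fst q) (filter (\<lambda>q. pp e \<le> fst q) zs)
            else Cf b (og e) (filter (\<lambda>q. pp e \<le> fst q) zs))"
    by auto
  show ?case unfolding eq by measurable
qed

lemma condf_meas[measurable]: "Measurable.pred borel (condf a s zs)"
  unfolding condf_def by measurable

definition PhiC where
  "PhiC a s zs x = (if condf a s zs (fst x) then ennreal (Cf (upd a (snd x)) (s + hh x) (fl s zs (fst x))) else 0)"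

lemma PhiC_e[measurable]: "(\<lambda>e. PhiC a s zs (e, m)) \<in> borel_measurable borel"
proof -
  have [measurable]: "(\<lambda>e. Cf (upd a m) (s + hr e) (filter (\<lambda>q. s + hr e \<le> fst q) zs)) \<in> borel_measurable borel"
    by (rule Cf_meas) measurable
  have eq: "(\<lambda>e. PhiC a s zs (e, m))
      = (\<lambda>e. if condf a s zs e then ennreal (Cf (upd a m) (s + hr e) (filter (\<lambda>q. s + hr e \<le> fst q) zs)) else 0)"
    by (simp add: PhiC_def hh_def fl_def fun_eq_iff)
  show ?thesis unfolding eq by measurable
qed

lemma PhiC_meas: "PhiC a s zs \<in> borel_measurable Dm"
  by (rule meas_Dm) (rule PhiC_e)

definition Jv where "Jv a s zs e = (\<Sum>m\<in>Marks. ennreal (w m) * PhiC a s zs (e, m))"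

lemma Jv_meas[measurable]: "Jv a s zs \<in> borel_measurable borel"
  unfolding Jv_def[abs_def] by measurable

lemma PhiC_le:
  assumes "s \<le> t1" "\<forall>q\<in>set zs. t1 < fst q" "e \<le> t1 - s"
  shows "PhiC a s ((t1, y1) # zs) (e, m) = ennreal (U (t1 - s - hr e) (upd a m) y1) * ennreal (Cf y1 t1 zs)"
proof -
  have hr: "hr e \<le> t1 - s" using assms by (simp add: hr_def)
  have c: "condf a s ((t1, y1) # zs) e" using assms hr unfolding condf_def by force
  have f: "fl s ((t1, y1) # zs) e = (t1, y1) # zs"
    unfolding fl_def using assms hr by (auto intro!: filter_True)
  have u: "0 \<le> U (t1 - s - hr e) (upd a m) y1" using hr by (intro U_bounds) simp
  show ?thesis unfolding PhiC_def using c f u by (simp add: hh_def ennreal_mult' diff_diff_eq)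
qed

lemma PhiC_gt:
  assumes "s \<le> t1" "\<forall>q\<in>set zs. t1 < fst q" "t1 - s < e"
  shows "PhiC a s ((t1, y1) # zs) (e, m) = (if y1 = a then PhiC a s zs (e, m) else 0)"
proof -
  have hr: "hr e = e" using assms by (simp add: hr_def)
  have c: "condf a s ((t1, y1) # zs) e \<longleftrightarrow> y1 = a \<and> condf a s zs e"
    using assms hr unfolding condf_def by auto
  have f: "fl s ((t1, y1) # zs) e = fl s zs e"
    unfolding fl_def using assms hr by auto
  show ?thesis unfolding PhiC_def using c f by auto
qed

lemma PhiC_shift:
  assumes "0 < x" "0 \<le> d"
  shows "PhiC a s zs (d + x, m) = PhiC a (s + d) zs (x, m)"
proof -
  have h1: "hr (d + x) = d + x" "hr x = x" using assms by (auto simp: hr_def)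
  have c: "condf a s zs (d + x) = condf a (s + d) zs x"
    unfolding condf_def h1 by (intro ball_cong refl) auto
  have f: "fl s zs (d + x) = fl (s + d) zs x"
    unfolding fl_def h1 by (intro filter_cong refl) auto
  have e: "s + hh (d + x, m) = s + d + hh (x, m)" by (simp add: hh_def h1)
  show ?thesis unfolding PhiC_def fst_conv snd_conv c f by (simp add: e)
qed

lemma Jv_shift: "0 < x \<Longrightarrow> 0 \<le> d \<Longrightarrow> Jv a s zs (d + x) = Jv a (s + d) zs x"
  unfolding Jv_def by (simp add: PhiC_shift)

lemma int_ed: "(\<integral>\<^sup>+e. ennreal (ed e) \<partial>lborel) = 1"
  unfolding ed_def using lam_pos by (rule int_expdens)

lemma shift_int:
  assumes d: "0 \<le> d"
  shows "(\<integral>\<^sup>+e. ennreal (ed e) * indicator {d<..} e * Jv a s zs e \<partial>lborel)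
       = ennreal (exp (- lam * d)) * (\<integral>\<^sup>+e. ennreal (ed e) * Jv a (s + d) zs e \<partial>lborel)"
proof -
  let ?f = "\<lambda>e. ennreal (ed e) * indicator {d<..} e * Jv a s zs e"
  have fm: "?f \<in> borel_measurable borel" by measurable
  have "(\<integral>\<^sup>+e. ?f e \<partial>lborel) = (\<integral>\<^sup>+e. ?f e \<partial>distr lborel borel ((+) d))"
    by (simp add: lborel_distr_plus)
  also have "\<dots> = (\<integral>\<^sup>+e. ?f (d + e) \<partial>lborel)"
    by (rule nn_integral_distr) (simp_all add: fm)
  also have "\<dots> = (\<integral>\<^sup>+e. ennreal (exp (- lam * d)) * (ennreal (ed e) * Jv a (s + d) zs e) \<partial>lborel)"
  proof (rule nn_integral_cong_AE)
    show "AE e in lborel. ?f (d + e) = ennreal (exp (- lam * d)) * (ennreal (ed e) * Jv a (s + d) zs e)"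
      using AE_lborel_singleton[of 0]
    proof eventually_elim
      case (elim e)
      show ?case
      proof (cases "0 < e")
        case True
        have "ed (d + e) = exp (- lam * d) * ed e"
          using True d by (simp add: ed_def exponential_density_def exp_add[symmetric] algebra_simps)
        then show ?thesis using True d
          by (simp add: Jv_shift indicator_def ennreal_mult' mult.assoc)
      next
        case False
        then have "e < 0" using elim by simp
        then show ?thesis by (simp add: indicator_def ed_def exponential_density_def)
      qed
    qed
  qed
  also have "\<dots> = ennreal (exp (- lam * d)) * (\<integral>\<^sup>+e. ennreal (ed e) * Jv a (s + d) zs e \<partial>lborel)"
    by (rule nn_integral_cmult) measurable
  finally show ?thesis .
qed

end


context crys begin

lemma Jv_Nil: "Jv a s [] e = 1"
proof -
  have "PhiC a s [] x = 1" for x by (simp add: PhiC_def condf_def fl_def)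
  then have "Jv a s [] e = (\<Sum>m\<in>Marks. ennreal (w m))" by (simp add: Jv_def)
  also have "\<dots> = 1" using w_nonneg sum_w by simp
  finally show ?thesis .
qed

lemma EC': "valid s zs \<Longrightarrow> ennreal (Cf a s zs) = (\<integral>\<^sup>+e. ennreal (ed e) * Jv a s zs e \<partial>lborel)"
proof (induction zs arbitrary: a s)
  case Nil then show ?case by (simp add: Jv_Nil int_ed)
next
  case (Cons p zs')
  obtain t1 y1 where p: "p = (t1, y1)" by (cases p)
  from valid_ConsD[OF Cons.prems] have v: "s \<le> t1" "valid t1 zs'" "\<forall>q\<in>set zs'. t1 < fst q"
    using p by auto
  define d where "d = t1 - s"
  have d0: "0 \<le> d" using v by (simp add: d_def)
  define C where "C = ennreal (Cf y1 t1 zs')"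
  define Sg where "Sg e = (\<Sum>m\<in>Marks. ennreal (w m) * ennreal (U (d - hr e) (upd a m) y1))" for e
  have Sg_meas[measurable]: "Sg \<in> borel_measurable borel" unfolding Sg_def[abs_def] by measurable
  have pw: "ennreal (ed e) * Jv a s (p # zs') e
      = ennreal (ed e) * indicator {..d} e * Sg e * C
        + ennreal (ed e) * indicator {d<..} e * (if y1 = a then Jv a s zs' e else 0)" for e
  proof (cases "e \<le> d")
    case True
    have "Jv a s (p # zs') e = Sg e * C"
      unfolding Jv_def p Sg_def C_def using PhiC_le[OF v(1) v(3)] True
      by (simp add: d_def sum_distrib_right mult.assoc)
    then show ?thesis using True by (simp add: indicator_def mult.assoc)
  next
    case False
    have "Jv a s (p # zs') e = (if y1 = a then Jv a s zs' e else 0)"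
      unfolding Jv_def p using PhiC_gt[OF v(1) v(3)] False by (simp add: d_def)
    then show ?thesis using False by (simp add: indicator_def)
  qed
  have "(\<integral>\<^sup>+e. ennreal (ed e) * Jv a s (p # zs') e \<partial>lborel)
      = (\<integral>\<^sup>+e. ennreal (ed e) * indicator {..d} e * Sg e * C
        + ennreal (ed e) * indicator {d<..} e * (if y1 = a then Jv a s zs' e else 0) \<partial>lborel)"
    by (simp only: pw)
  also have "\<dots> = (\<integral>\<^sup>+e. ennreal (ed e) * indicator {..d} e * Sg e * C \<partial>lborel)
        + (\<integral>\<^sup>+e. ennreal (ed e) * indicator {d<..} e * (if y1 = a then Jv a s zs' e else 0) \<partial>lborel)"
    by (rule nn_integral_add) measurable
  also have "(\<integral>\<^sup>+e. ennreal (ed e) * indicator {..d} e * Sg e * C \<partial>lborel)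
      = (\<integral>\<^sup>+e. ennreal (ed e) * indicator {..d} e * Sg e \<partial>lborel) * C"
    by (rule nn_integral_multc) measurable
  also have "(\<integral>\<^sup>+e. ennreal (ed e) * indicator {d<..} e * (if y1 = a then Jv a s zs' e else 0) \<partial>lborel)
      = (if y1 = a then ennreal (exp (- lam * d)) * ennreal (Cf a t1 zs') else 0)"
  proof (cases "y1 = a")
    case True
    have "(\<integral>\<^sup>+e. ennreal (ed e) * indicator {d<..} e * Jv a s zs' e \<partial>lborel)
        = ennreal (exp (- lam * d)) * (\<integral>\<^sup>+e. ennreal (ed e) * Jv a (s + d) zs' e \<partial>lborel)"
      by (rule shift_int[OF d0])
    also have "s + d = t1" by (simp add: d_def)
    also have "(\<integral>\<^sup>+e. ennreal (ed e) * Jv a t1 zs' e \<partial>lborel) = ennreal (Cf a t1 zs')"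
      by (rule Cons.IH[OF v(2), symmetric])
    finally show ?thesis using True by simp
  qed simp
  finally have R: "(\<integral>\<^sup>+e. ennreal (ed e) * Jv a s (p # zs') e \<partial>lborel)
      = (\<integral>\<^sup>+e. ennreal (ed e) * indicator {..d} e * Sg e \<partial>lborel) * C
        + (if y1 = a then ennreal (exp (- lam * d)) * ennreal (Cf a t1 zs') else 0)" .
  have EU': "ennreal (U d a y1) = ennreal (exp (- lam * d) * (if a = y1 then 1 else 0))
      + (\<integral>\<^sup>+e. ennreal (ed e) * indicator {..d} e * Sg e \<partial>lborel)"
    unfolding Sg_def by (rule EU[OF d0])
  have "ennreal (Cf a s (p # zs')) = ennreal (U d a y1) * C"
    using U_bounds(1)[OF d0, of a y1] by (simp add: p d_def C_def ennreal_mult')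
  also have "\<dots> = ennreal (exp (- lam * d) * (if a = y1 then 1 else 0)) * C
      + (\<integral>\<^sup>+e. ennreal (ed e) * indicator {..d} e * Sg e \<partial>lborel) * C"
    unfolding EU' by (simp add: distrib_right)
  also have "ennreal (exp (- lam * d) * (if a = y1 then 1 else 0)) * C
      = (if y1 = a then ennreal (exp (- lam * d)) * ennreal (Cf a t1 zs') else 0)"
    by (auto simp: C_def)
  finally show ?case unfolding R by (simp add: add.commute)
qed

lemma EC: "valid s zs \<Longrightarrow> ennreal (Cf a s zs) = (\<integral>\<^sup>+x. PhiC a s zs x \<partial>Dm)"
  by (subst nn_int_Dm[OF PhiC_e]) (simp add: EC' Jv_def)

end


context crys begin

lemma probT:
  assumes H: "0 \<le> H"
  shows "(\<integral>\<^sup>+x. indicator {x. hh x \<le> H} x \<partial>Dm) = ennreal (1 - exp (- lam * H))"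
proof -
  have "(\<integral>\<^sup>+x. indicator {x. hh x \<le> H} x \<partial>Dm)
     = (\<integral>\<^sup>+e. ennreal (ed e) * (\<Sum>m\<in>Marks. ennreal (w m) * indicator {x. hh x \<le> H} (e, m)) \<partial>lborel)"
  proof (rule nn_int_Dm)
    fix m
    have eq: "(\<lambda>e. indicator {x. hh x \<le> H} (e, m) :: ennreal) = indicator {e. hr e \<le> H}"
      by (auto simp: hh_def indicator_def)
    show "(\<lambda>e. indicator {x. hh x \<le> H} (e, m) :: ennreal) \<in> borel_measurable borel"
      unfolding eq by measurable
  qed
  also have "\<dots> = (\<integral>\<^sup>+e. ennreal (lam * exp (- lam * e)) * indicator {0..H} e \<partial>lborel)"
  proof (rule nn_integral_cong)
    fix e :: real
    have "(\<Sum>m\<in>Marks. ennreal (w m) * indicator {x. hh x \<le> H} (e, m)) = (\<Sum>m\<in>Marks. ennreal (w m)) * indicator {e. hr e \<le> H} e"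
      by (simp add: sum_distrib_right hh_def indicator_def)
    also have "\<dots> = indicator {e. hr e \<le> H} e" using w_nonneg sum_w by simp
    finally show "ennreal (ed e) * (\<Sum>m\<in>Marks. ennreal (w m) * indicator {x. hh x \<le> H} (e, m))
        = ennreal (lam * exp (- lam * e)) * indicator {0..H} e"
      using H by (auto simp: indicator_def ed_def exponential_density_def hr_def mult.commute)
  qed
  also have "\<dots> = ennreal ((- exp (- lam * H)) - (- exp (- lam * 0)))"
  proof (rule nn_integral_FTC_Icc)
    fix e :: real
    show "DERIV (\<lambda>e. - exp (- lam * e)) e :> lam * exp (- lam * e)"
      by (auto intro!: derivative_eq_intros)
    show "0 \<le> lam * exp (- lam * e)" using lam_pos by simp
  qed (use H in auto)
  finally show ?thesis by simp
qed

lemma valid_fl: "valid s zs \<Longrightarrow> valid (s + hr e) (fl s zs e)"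
  unfolding valid_def fl_def by (auto simp: sorted_wrt_filter)

lemma uniq_k:
  assumes H: "0 \<le> H"
  shows "valid s zs \<Longrightarrow> (\<forall>p\<in>set zs. fst p \<le> s + H) \<Longrightarrow>
    G a s zs \<le> ennreal (Cf a s zs) + ennreal (1 - exp (- lam * H)) ^ k \<and>
    ennreal (Cf a s zs) \<le> G a s zs + ennreal (1 - exp (- lam * H)) ^ k"
proof (induction k arbitrary: a s zs)
  case 0
  have "G a s zs \<le> 1" by (rule G_le1)
  moreover have "Cf a s zs \<le> 1" using Cf_bounds[OF 0(1)] by simp
  ultimately show ?case by (auto intro: order_trans add_increasing)
next
  case (Suc k)
  define q where "q = ennreal (1 - exp (- lam * H))"
  have Imeas[measurable]: "{x. hh x \<le> H} \<in> sets Dm"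
  proof -
    have "{x\<in>space Dm. hh x \<le> H} \<in> sets Dm" by measurable
    then show ?thesis by simp
  qed
  have key: "PhiG a s zs x \<le> PhiC a s zs x + q ^ k * indicator {x. hh x \<le> H} x \<and>
             PhiC a s zs x \<le> PhiG a s zs x + q ^ k * indicator {x. hh x \<le> H} x" for x
  proof (cases "condf a s zs (fst x)")
    case False then show ?thesis by (simp add: PhiG_def PhiC_def)
  next
    case True
    show ?thesis
    proof (cases "hh x \<le> H")
      case False
      have "fl s zs (fst x) = []"
        using Suc.prems(2) False unfolding fl_def hh_def by (force simp: filter_empty_conv)
      then show ?thesis using True by (simp add: PhiG_def PhiC_def G_Nil)
    next
      case le: True
      have v: "valid (s + hh x) (fl s zs (fst x))"
        using valid_fl[OF Suc.prems(1)] by (simp add: hh_def)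
      have b: "\<forall>p\<in>set (fl s zs (fst x)). fst p \<le> s + hh x + H"
        using Suc.prems(2) hh_nonneg[of x] by (auto simp: fl_def)
      from Suc.IH[OF v b, of "upd a (snd x)"] le True show ?thesis
        by (simp add: PhiG_def PhiC_def q_def)
    qed
  qed
  have "G a s zs = (\<integral>\<^sup>+x. PhiG a s zs x \<partial>Dm)" by (rule EG)
  also have "\<dots> \<le> (\<integral>\<^sup>+x. PhiC a s zs x + q ^ k * indicator {x. hh x \<le> H} x \<partial>Dm)"
    by (rule nn_integral_mono) (use key in auto)
  also have "\<dots> = (\<integral>\<^sup>+x. PhiC a s zs x \<partial>Dm) + q ^ k * (\<integral>\<^sup>+x. indicator {x. hh x \<le> H} x \<partial>Dm)"
    using PhiC_meas by (subst nn_integral_add) (auto simp: nn_integral_cmult)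
  also have "\<dots> = ennreal (Cf a s zs) + q ^ Suc k"
    by (simp add: EC[OF Suc.prems(1)] probT[OF H] q_def mult.commute)
  finally have A1: "G a s zs \<le> ennreal (Cf a s zs) + q ^ Suc k" .
  have "ennreal (Cf a s zs) = (\<integral>\<^sup>+x. PhiC a s zs x \<partial>Dm)" by (rule EC[OF Suc.prems(1)])
  also have "\<dots> \<le> (\<integral>\<^sup>+x. PhiG a s zs x + q ^ k * indicator {x. hh x \<le> H} x \<partial>Dm)"
    by (rule nn_integral_mono) (use key in auto)
  also have "\<dots> = (\<integral>\<^sup>+x. PhiG a s zs x \<partial>Dm) + q ^ k * (\<integral>\<^sup>+x. indicator {x. hh x \<le> H} x \<partial>Dm)"
    using PhiG_meas by (subst nn_integral_add) (auto simp: nn_integral_cmult)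
  also have "\<dots> = G a s zs + q ^ Suc k"
    by (simp add: EG[symmetric] probT[OF H] q_def mult.commute)
  finally have A2: "ennreal (Cf a s zs) \<le> G a s zs + q ^ Suc k" .
  show ?case using A1 A2 by (simp add: q_def)
qed

lemma G_eq_Cf:
  assumes v: "valid s zs"
  shows "G a s zs = ennreal (Cf a s zs)"
proof -
  define H where "H = Max (insert 0 ((\<lambda>p. fst p - s) ` set zs))"
  have T0: "0 \<le> H" unfolding H_def by (rule Max_ge) auto
  have Tb: "\<forall>p\<in>set zs. fst p \<le> s + H"
  proof
    fix p assume "p \<in> set zs"
    then have "fst p - s \<le> H" unfolding H_def by (intro Max_ge) auto
    then show "fst p \<le> s + H" by simp
  qed
  define qr where "qr = 1 - exp (- lam * H)"
  have qr: "0 \<le> qr" "qr < 1" using T0 lam_pos by (auto simp: qr_def)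
  obtain g where g: "G a s zs = ennreal g" "0 \<le> g"
    using G_le1[of a s zs] by (metis ennreal_cases ennreal_le_iff2 ennreal_one_less_top not_le top.extremum_strict ennreal_top_neq_one)
  define c where "c = Cf a s zs"
  have c0: "0 \<le> c" using Cf_bounds[OF v] by (simp add: c_def)
  have le1: "g \<le> c + qr ^ k" and le2: "c \<le> g + qr ^ k" for k
  proof -
    have u: "ennreal g \<le> ennreal c + ennreal qr ^ k" "ennreal c \<le> ennreal g + ennreal qr ^ k"
      using uniq_k[OF T0 v Tb, of a k] g by (simp_all add: c_def qr_def)
    have p: "ennreal qr ^ k = ennreal (qr ^ k)" using qr by (simp add: ennreal_power)
    have q0: "0 \<le> qr ^ k" using qr by simp
    have s1: "ennreal c + ennreal (qr ^ k) = ennreal (c + qr ^ k)" using c0 q0 by (rule ennreal_plus[symmetric])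
    have s2: "ennreal g + ennreal (qr ^ k) = ennreal (g + qr ^ k)" using g(2) q0 by (rule ennreal_plus[symmetric])
    have h1: "ennreal g \<le> ennreal (c + qr ^ k)" and h2: "ennreal c \<le> ennreal (g + qr ^ k)"
      using u unfolding p s1 s2 by auto
    show "g \<le> c + qr ^ k" using h1 by (subst (asm) ennreal_le_iff) (use c0 q0 in auto)
    show "c \<le> g + qr ^ k" using h2 by (subst (asm) ennreal_le_iff) (use g(2) q0 in auto)
  qed
  have l1: "(\<lambda>k. c + qr ^ k) \<longlonglongrightarrow> c + 0" using qr by (intro tendsto_add tendsto_const LIMSEQ_power_zero) auto
  have l2: "(\<lambda>k. g + qr ^ k) \<longlonglongrightarrow> g + 0" using qr by (intro tendsto_add tendsto_const LIMSEQ_power_zero) auto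
  have "g \<le> c" using LIMSEQ_le_const[OF l1] le1 by auto
  moreover have "c \<le> g" using LIMSEQ_le_const[OF l2] le2 by auto
  ultimately show ?thesis using g by (simp add: c_def)
qed

end


context crys begin

lemma sorted_zip: "sorted_wrt (<) ts \<Longrightarrow> sorted_wrt (\<lambda>p q. fst p < fst q) (zip ts ys)"
proof (induction ts arbitrary: ys)
  case Nil then show ?case by simp
next
  case (Cons t ts) then show ?case
    by (cases ys) (auto dest: set_zip_leftD)
qed

lemma valid_zip: "sorted_wrt (<) ts \<Longrightarrow> (\<forall>t\<in>set ts. 0 \<le> t) \<Longrightarrow> valid 0 (zip ts ys)"
  unfolding valid_def by (auto simp: sorted_zip dest: set_zip_leftD)

lemma Cf_prod: "length ts = length ys \<Longrightarrow> Cf a s (zip ts ys) =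
   (\<Prod>i<length ts. U (ts ! i - (if i = 0 then s else ts ! (i - 1))) (if i = 0 then a else ys ! (i - 1)) (ys ! i))"
proof (induction ts arbitrary: ys a s)
  case Nil then show ?case by simp
next
  case (Cons t ts)
  then obtain y ys' where ys: "ys = y # ys'" "length ts = length ys'" by (cases ys) auto
  have "Cf a s (zip (t # ts) ys) = U (t - s) a y * Cf y t (zip ts ys')" by (simp add: ys)
  also have "Cf y t (zip ts ys') = (\<Prod>i<length ts. U (ts ! i - (if i = 0 then t else ts ! (i - 1))) (if i = 0 then y else ys' ! (i - 1)) (ys' ! i))"
    by (rule Cons.IH[OF ys(2)])
  also have "U (t - s) a y * \<dots> = (\<Prod>i<length (t # ts). U ((t # ts) ! i - (if i = 0 then s else (t # ts) ! (i - 1))) (if i = 0 then a else ys ! (i - 1)) (ys ! i))"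
    unfolding length_Cons prod.lessThan_Suc_shift by (simp add: ys nth_Cons')
  finally show ?case .
qed

lemma Xp_cadlag_right: "0 \<le> t \<Longrightarrow> \<exists>\<epsilon>>0. \<forall>s. t \<le> s \<and> s < t + \<epsilon> \<longrightarrow> Xp s a \<omega> = Xp t a \<omega>"
proof (cases "Good \<omega>")
  case False then show ?thesis by (auto simp: Xp_def intro!: exI[of _ 1])
next
  case G: True
  assume "0 \<le> t"
  define K where "K = (LEAST k. t < T (Suc k) \<omega>)"
  have ex: "\<exists>k. t < T (Suc k) \<omega>"
  proof -
    obtain k where "t < T k \<omega>" using G unfolding Good_iff by blast
    then show ?thesis using T_mono[of k "Suc k" \<omega>] by (intro exI[of _ k]) simp
  qed
  have K1: "t < T (Suc K) \<omega>" unfolding K_def using ex by (rule LeastI_ex)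
  have K2: "\<not> t < T (Suc k) \<omega>" if "k < K" for k using that unfolding K_def by (rule not_less_Least)
  show ?thesis
  proof (intro exI[of _ "T (Suc K) \<omega> - t"] conjI allI impI)
    show "0 < T (Suc K) \<omega> - t" using K1 by simp
    fix s assume s: "t \<le> s \<and> s < t + (T (Suc K) \<omega> - t)"
    have "(LEAST k. s < T (Suc k) \<omega>) = K"
    proof (rule Least_equality)
      show "s < T (Suc K) \<omega>" using s by simp
      fix k assume "s < T (Suc k) \<omega>"
      then show "K \<le> k" using K2[of k] s by (meson le_less_trans not_le)
    qed
    then show "Xp s a \<omega> = Xp t a \<omega>" using G by (simp add: Xp_def K_def)
  qed
qed

lemma Xp_cadlag_left: "0 < t \<Longrightarrow> \<exists>\<epsilon>>0. \<forall>s r. t - \<epsilon> < s \<and> s < t \<and> t - \<epsilon> < r \<and> r < t \<longrightarrow> Xp s a \<omega> = Xp r a \<omega>"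
proof (cases "Good \<omega>")
  case False then show ?thesis by (auto simp: Xp_def intro!: exI[of _ 1])
next
  case G: True
  assume t: "0 < t"
  define K where "K = (LEAST k. t \<le> T (Suc k) \<omega>)"
  have ex: "\<exists>k. t \<le> T (Suc k) \<omega>"
  proof -
    obtain k where "t < T k \<omega>" using G unfolding Good_iff by blast
    then show ?thesis using T_mono[of k "Suc k" \<omega>] by (intro exI[of _ k]) simp
  qed
  have K1: "t \<le> T (Suc K) \<omega>" unfolding K_def using ex by (rule LeastI_ex)
  have K2: "\<not> t \<le> T (Suc k) \<omega>" if "k < K" for k using that unfolding K_def by (rule not_less_Least)
  have L: "T K \<omega> < t"
  proof (cases K)
    case 0 then show ?thesis using t by simp
  next
    case (Suc j) then show ?thesis using K2[of j] by simp
  qed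
  have N: "(LEAST k. s < T (Suc k) \<omega>) = K" if "T K \<omega> < s" "s < t" for s
  proof (rule Least_equality)
    show "s < T (Suc K) \<omega>" using that K1 by simp
    fix k assume k: "s < T (Suc k) \<omega>"
    show "K \<le> k"
    proof (rule ccontr)
      assume "\<not> K \<le> k"
      then have "Suc k \<le> K" by simp
      then have "T (Suc k) \<omega> \<le> T K \<omega>" by (rule T_mono)
      then show False using k that by simp
    qed
  qed
  show ?thesis
  proof (intro exI[of _ "t - T K \<omega>"] conjI allI impI)
    show "0 < t - T K \<omega>" using L by simp
    fix s r assume sr: "t - (t - T K \<omega>) < s \<and> s < t \<and> t - (t - T K \<omega>) < r \<and> r < t"
    then show "Xp s a \<omega> = Xp r a \<omega>" using G N[of s] N[of r] by (simp add: Xp_def)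
  qed
qed

definition le_st :: "(nat \<Rightarrow> nat) \<Rightarrow> (nat \<Rightarrow> nat) \<Rightarrow> bool" where
  "le_st a b \<longleftrightarrow> (\<forall>j\<le>n+1. a j \<le> b j)"

lemma V_mono:
  assumes "a j = b j" "a (j - 1) \<le> b (j - 1)" "a (j + 1) \<le> b (j + 1)"
  shows "crystal_V j a \<le> crystal_V j b"
  using assms unfolding crystal_V_def by auto

lemma upd_mono: assumes ab: "le_st a b" shows "le_st (upd a m) (upd b m)"
proof (cases "m \<in> Marks")
  case False then show ?thesis using ab by (simp add: upd_def)
next
  case True
  obtain j v where m: "m = (j, v)" by (cases m)
  have j: "1 \<le> j" "j \<le> n" using True m by (auto simp: Marks_def)
  have ajb: "a j \<le> b j" using ab j by (simp add: le_st_def)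
  show ?thesis
  proof (cases "v \<le> crystal_V j a")
    case va: True
    show ?thesis
    proof (cases "v \<le> crystal_V j b")
      case True then show ?thesis using va ab True \<open>m \<in> Marks\<close> by (auto simp: upd_def m le_st_def)
    next
      case vb: False
      have "a j \<noteq> b j"
      proof
        assume eq: "a j = b j"
        have "crystal_V j a \<le> crystal_V j b"
          using eq ab j by (intro V_mono) (auto simp: le_st_def)
        then show False using va vb by simp
      qed
      then have "a j + 1 \<le> b j" using ajb by simp
      then show ?thesis using va vb ab \<open>m \<in> Marks\<close> by (auto simp: upd_def m le_st_def)
    qed
  next
    case va: False
    then show ?thesis using ab \<open>m \<in> Marks\<close> by (auto simp: upd_def m le_st_def)
  qed
qed

lemma St_mono: "le_st a b \<Longrightarrow> le_st (St k a \<omega>) (St k b \<omega>)"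
  by (induction k arbitrary: a b \<omega>) (auto intro: upd_mono)

lemma Xp_mono: "le_st a b \<Longrightarrow> le_st (Xp t a \<omega>) (Xp t b \<omega>)"
  by (simp add: Xp_def St_mono)

end


context crys begin

definition PS :: "(real \<Rightarrow> nat \<Rightarrow> nat) measure" where
  "PS = Pi\<^sub>M UNIV (\<lambda>_. count_space UNIV)"

definition Fm :: "(nat \<Rightarrow> nat) \<Rightarrow> (nat \<Rightarrow> nat) \<Rightarrow> (real \<times> (nat \<times> nat)) stream \<Rightarrow> (real \<Rightarrow> nat \<Rightarrow> nat) \<times> (real \<Rightarrow> nat \<Rightarrow> nat)" where
  "Fm x y \<omega> = (\<lambda>t. Xp t x \<omega>, \<lambda>t. Xp t y \<omega>)"

definition Mp :: "(nat \<Rightarrow> nat) \<Rightarrow> (nat \<Rightarrow> nat) \<Rightarrow> ((real \<Rightarrow> nat \<Rightarrow> nat) \<times> (real \<Rightarrow> nat \<Rightarrow> nat)) measure" where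
  "Mp x y = restrict_space (PS \<Otimes>\<^sub>M PS) (Fm x y ` space Sm)"

definition mup where "mup x y = distr Sm (Mp x y) (Fm x y)"

lemma space_PS[simp]: "space PS = UNIV" by (simp add: PS_def space_PiM)

lemma space_Mp: "space (Mp x y) = Fm x y ` space Sm"
  by (simp add: Mp_def space_restrict_space space_pair_measure)

lemma path_meas: "(\<lambda>\<omega> t. Xp t a \<omega>) \<in> measurable Sm PS"
  unfolding PS_def by (rule measurable_PiM_single') (auto intro: Xp_meas)

lemma Fm_meas: "Fm x y \<in> measurable Sm (Mp x y)"
  unfolding Mp_def
proof (rule measurable_restrict_space2)
  show "Fm x y \<in> space Sm \<rightarrow> Fm x y ` space Sm" by auto
  show "Fm x y \<in> measurable Sm (PS \<Otimes>\<^sub>M PS)"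
    unfolding Fm_def by (intro measurable_Pair path_meas)
qed

lemma coord_PS: "(\<lambda>\<omega>. \<omega> t) \<in> measurable PS (count_space UNIV)"
  unfolding PS_def by (rule measurable_component_singleton) simp

lemma coord_Mp:
  assumes pr: "pr \<in> measurable (PS \<Otimes>\<^sub>M PS) PS"
  shows "(\<lambda>\<omega>. pr \<omega> t) \<in> measurable (Mp x y) (count_space UNIV)"
  unfolding Mp_def by (intro measurable_restrict_space1 measurable_compose[OF pr coord_PS])

lemma prob_mup: "prob_space (mup x y)"
  unfolding mup_def by (rule prob_space.prob_space_distr[OF prob_Sm Fm_meas])

lemma process:
  assumes pr: "pr \<in> measurable (PS \<Otimes>\<^sub>M PS) PS"
    and pF: "\<And>\<omega>. pr (Fm x y \<omega>) = (\<lambda>t. Xp t a \<omega>)"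
  shows "crystal_process n \<beta> (mup x y) (\<lambda>t \<omega>. pr \<omega> t) a"
  unfolding crystal_process_def
proof (intro conjI allI impI)
  fix t :: real
  show "(\<lambda>\<omega>. pr \<omega> t) \<in> measurable (mup x y) (count_space UNIV)"
    unfolding mup_def measurable_distr_eq1 by (rule coord_Mp[OF pr])
next
  fix ts :: "real list" and ys :: "(nat \<Rightarrow> nat) list"
  assume ts: "sorted_wrt (<) ts" "\<forall>t\<in>set ts. 0 \<le> t" and len: "length ys = length ts"
  have [measurable]: "(\<lambda>\<omega>. pr \<omega> t) \<in> measurable (Mp x y) (count_space UNIV)" for t
    by (rule coord_Mp[OF pr])
  let ?B = "{\<omega> \<in> space (Mp x y). \<forall>i<length ts. pr \<omega> (ts ! i) = ys ! i}"
  have Bs: "?B \<in> sets (Mp x y)" by measurable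
  have sp: "space (mup x y) = space (Mp x y)" by (simp add: mup_def)
  have pre: "Fm x y -` ?B \<inter> space Sm = {\<omega>\<in>space Sm. \<forall>i<length ts. Xp (ts ! i) a \<omega> = ys ! i}"
    by (auto simp: space_Mp pF)
  have "measure (mup x y) {\<omega> \<in> space (mup x y). \<forall>i<length ts. pr \<omega> (ts ! i) = ys ! i}
      = measure (mup x y) ?B" by (simp only: sp)
  also have "\<dots> = measure Sm (Fm x y -` ?B \<inter> space Sm)"
    unfolding mup_def by (rule measure_distr[OF Fm_meas Bs])
  also have "\<dots> = measure Sm {\<omega>\<in>space Sm. \<forall>i<length ts. Xp (ts ! i) a \<omega> = ys ! i}"
    by (simp only: pre)
  also have "emeasure Sm {\<omega>\<in>space Sm. \<forall>i<length ts. Xp (ts ! i) a \<omega> = ys ! i} = G a 0 (zip ts ys)"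
  proof -
    have [measurable]: "Xp t b \<in> measurable Sm (count_space UNIV)" for t b by (rule Xp_meas)
    have eqv: "(\<forall>p\<in>set (zip ts ys). Xp (fst p - 0) a \<omega> = snd p) \<longleftrightarrow> (\<forall>i<length ts. Xp (ts ! i) a \<omega> = ys ! i)" for \<omega>
      using len by (auto simp: set_zip)
    show ?thesis unfolding G_def A_def eqv
      using AE_Good by (intro emeasure_eq_AE) auto
  qed
  then have "measure Sm {\<omega>\<in>space Sm. \<forall>i<length ts. Xp (ts ! i) a \<omega> = ys ! i} = Cf a 0 (zip ts ys)"
    using G_eq_Cf[OF valid_zip[OF ts]] Cf_bounds[OF valid_zip[OF ts]]
    by (simp add: measure_def)
  also have "\<dots> = (\<Prod>i<length ts. crystal_P n \<beta> (ts ! i - (if i = 0 then 0 else ts ! (i - 1)))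
             (if i = 0 then a else ys ! (i - 1)) (ys ! i))"
    using len by (simp add: Cf_prod crystal_P_U)
  finally show "measure (mup x y) {\<omega> \<in> space (mup x y). \<forall>i<length ts. pr \<omega> (ts ! i) = ys ! i} =
       (\<Prod>i<length ts. crystal_P n \<beta> (ts ! i - (if i = 0 then 0 else ts ! (i - 1)))
             (if i = 0 then a else ys ! (i - 1)) (ys ! i))" .
next
  show "AE \<omega> in mup x y.
        (\<forall>t\<ge>0. \<exists>\<epsilon>>0. \<forall>s. t \<le> s \<and> s < t + \<epsilon> \<longrightarrow> pr \<omega> s = pr \<omega> t) \<and>
        (\<forall>t>0. \<exists>\<epsilon>>0. \<forall>s r. t - \<epsilon> < s \<and> s < t \<and> t - \<epsilon> < r \<and> r < t \<longrightarrow> pr \<omega> s = pr \<omega> r)"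
  proof (rule AE_I2)
    fix \<omega> assume "\<omega> \<in> space (mup x y)"
    then obtain \<omega>' where \<omega>: "\<omega> = Fm x y \<omega>'" by (auto simp: mup_def space_Mp)
    show "(\<forall>t\<ge>0. \<exists>\<epsilon>>0. \<forall>s. t \<le> s \<and> s < t + \<epsilon> \<longrightarrow> pr \<omega> s = pr \<omega> t) \<and>
        (\<forall>t>0. \<exists>\<epsilon>>0. \<forall>s r. t - \<epsilon> < s \<and> s < t \<and> t - \<epsilon> < r \<and> r < t \<longrightarrow> pr \<omega> s = pr \<omega> r)"
      unfolding \<omega> pF using Xp_cadlag_right Xp_cadlag_left by blast
  qed
qed

lemma main:
  assumes x: "x \<in> crystal_states n" and y: "y \<in> crystal_states n" and xy: "\<forall>j\<in>{1..n}. x j \<le> y j"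
  shows "\<exists>\<mu> :: ((real \<Rightarrow> nat \<Rightarrow> nat) \<times> (real \<Rightarrow> nat \<Rightarrow> nat)) measure.
           prob_space \<mu> \<and>
           crystal_process n \<beta> \<mu> (\<lambda>t \<omega>. fst \<omega> t) x \<and>
           crystal_process n \<beta> \<mu> (\<lambda>t \<omega>. snd \<omega> t) y \<and>
           (AE \<omega> in \<mu>. \<forall>t\<ge>0. \<forall>j\<in>{1..n}. fst \<omega> t j \<le> snd \<omega> t j)"
proof (intro exI conjI)
  show "prob_space (mup x y)" by (rule prob_mup)
  show "crystal_process n \<beta> (mup x y) (\<lambda>t \<omega>. fst \<omega> t) x"
    by (rule process) (auto simp: Fm_def)
  show "crystal_process n \<beta> (mup x y) (\<lambda>t \<omega>. snd \<omega> t) y"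
    by (rule process) (auto simp: Fm_def)
  have le: "le_st x y"
    unfolding le_st_def
  proof (intro allI impI)
    fix j assume "j \<le> n + 1"
    then consider "j = 0" | "j = n + 1" | "j \<in> {1..n}" by force
    then show "x j \<le> y j" using x y xy by cases (auto simp: crystal_states_def)
  qed
  show "AE \<omega> in mup x y. \<forall>t\<ge>0. \<forall>j\<in>{1..n}. fst \<omega> t j \<le> snd \<omega> t j"
  proof (rule AE_I2)
    fix \<omega> assume "\<omega> \<in> space (mup x y)"
    then obtain \<omega>' where \<omega>: "\<omega> = Fm x y \<omega>'" by (auto simp: mup_def space_Mp)
    show "\<forall>t\<ge>0. \<forall>j\<in>{1..n}. fst \<omega> t j \<le> snd \<omega> t j"
      using Xp_mono[OF le] unfolding \<omega> Fm_def le_st_def by auto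
  qed
qed

end

theorem lemma3:
  fixes n :: nat and \<beta> :: "nat \<Rightarrow> real" and x y :: "nat \<Rightarrow> nat"
  assumes "2 \<le> n"
    and "0 < \<beta> 0" and "0 < \<beta> 1" and "0 < \<beta> 2"
    and "\<beta> 0 \<le> \<beta> 1" and "\<beta> 1 \<le> \<beta> 2"
    and "x \<in> crystal_states n" and "y \<in> crystal_states n"
    and "\<forall>j\<in>{1..n}. x j \<le> y j"
  shows "\<exists>\<mu> :: ((real \<Rightarrow> nat \<Rightarrow> nat) \<times> (real \<Rightarrow> nat \<Rightarrow> nat)) measure.
           prob_space \<mu> \<and>
           crystal_process n \<beta> \<mu> (\<lambda>t \<omega>. fst \<omega> t) x \<and>
           crystal_process n \<beta> \<mu> (\<lambda>t \<omega>. snd \<omega> t) y \<and>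
           (AE \<omega> in \<mu>. \<forall>t\<ge>0. \<forall>j\<in>{1..n}. fst \<omega> t j \<le> snd \<omega> t j)"
proof -
  interpret crys n \<beta> using assms(1,2,5,6) by unfold_locales auto
  show ?thesis using main assms(7-9) by blast
qed


end
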